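(* Let $A$ be a Noetherian commutative ring with identity, let $A[\mathbf{x}]=A[x_1,\ldots,x_n]$ be equipped with a monomial order, let $I\subset A[\mathbf{x}]$ be a proper ideal, and define $M=A[\mathbf{x}]/I$. Suppose that for each prime $p\subset A$ and for each monomial $\mathbf{x}^E$, the ideal $\mathrm{in}(I)_E\,B$ is either $(0)$ or $(1)$, where $B=A_p/(I\cap A)_p$. Then $M$ is a faithfully flat $A/(I\cap A)$-module.
   Context: A monomial order $>$ is a total order on monomials such that $\mathbf{x}^E>\mathbf{x}^F$ implies $\mathbf{x}^G\mathbf{x}^E>\mathbf{x}^G\mathbf{x}^F$, and $x_i>1$ for each $i$. $\mathrm{in}(f)$ is the greatest term $c\,\mathbf{x}^E$ ($c\neq0$) of a nonzero polynomial $f$; $\mathrm{in}(I)$ is the ideal generated by all $\mathrm{in}(f)$, $f\in I$. For an ideal $J\subset A[\mathbf{x}]$ and exponent $E$, the coefficient ideal is $J_E=(c\in A\mid c\,\mathbf{x}^E\in J)\subset A$; $J_E B$ is the ideal of $B$ generated by its image. *)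

theory Defs
  imports Main "HOL-Library.Poly_Mapping"
begin

definition is_ideal :: "'a::comm_ring_1 set \<Rightarrow> bool" where
  "is_ideal J \<longleftrightarrow> 0 \<in> J \<and> (\<forall>x\<in>J. \<forall>y\<in>J. x + y \<in> J) \<and> (\<forall>r. \<forall>x\<in>J. r * x \<in> J)"

definition gen_ideal :: "'a::comm_ring_1 set \<Rightarrow> 'a set" where
  "gen_ideal S = \<Inter>{J. is_ideal J \<and> S \<subseteq> J}"

definition prime_ideal :: "'a::comm_ring_1 set \<Rightarrow> bool" where
  "prime_ideal P \<longleftrightarrow> is_ideal P \<and> P \<noteq> UNIV \<and> (\<forall>a b. a * b \<in> P \<longrightarrow> a \<in> P \<or> b \<in> P)"

definition noetherian :: "'a::comm_ring_1 itself \<Rightarrow> bool" where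
  "noetherian _ \<longleftrightarrow> (\<forall>J::'a set. is_ideal J \<longrightarrow> (\<exists>F. finite F \<and> F \<subseteq> J \<and> J = gen_ideal F))"

text \<open>Monomials x^E are exponent vectors; polynomials are
  finitely supported maps from monomials to coefficients, polynomials with coefficients in 'a.
  The relation \<open>ord F E\<close> means x^E > x^F.\<close>

definition monomial_order :: "(('v \<Rightarrow>\<^sub>0 nat) \<Rightarrow> ('v \<Rightarrow>\<^sub>0 nat) \<Rightarrow> bool) \<Rightarrow> bool" where
  "monomial_order ord \<longleftrightarrow>
     (\<forall>E. \<not> ord E E) \<and>
     (\<forall>E F G. ord E F \<longrightarrow> ord F G \<longrightarrow> ord E G) \<and>
     (\<forall>E F. E \<noteq> F \<longrightarrow> ord E F \<or> ord F E) \<and>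
     (\<forall>E F G. ord F E \<longrightarrow> ord (G + F) (G + E)) \<and>
     (\<forall>i. ord 0 (Poly_Mapping.single i 1))"

definition lead_exp :: "(('v \<Rightarrow>\<^sub>0 nat) \<Rightarrow> ('v \<Rightarrow>\<^sub>0 nat) \<Rightarrow> bool) \<Rightarrow> (('v \<Rightarrow>\<^sub>0 nat) \<Rightarrow>\<^sub>0 'a::zero) \<Rightarrow> ('v \<Rightarrow>\<^sub>0 nat)" where
  "lead_exp ord f = (THE E. E \<in> Poly_Mapping.keys f \<and> (\<forall>F\<in>Poly_Mapping.keys f. F \<noteq> E \<longrightarrow> ord F E))"

definition init_term :: "(('v \<Rightarrow>\<^sub>0 nat) \<Rightarrow> ('v \<Rightarrow>\<^sub>0 nat) \<Rightarrow> bool) \<Rightarrow> (('v \<Rightarrow>\<^sub>0 nat) \<Rightarrow>\<^sub>0 'a::zero) \<Rightarrow> (('v \<Rightarrow>\<^sub>0 nat) \<Rightarrow>\<^sub>0 'a)" where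
  "init_term ord f = Poly_Mapping.single (lead_exp ord f) (Poly_Mapping.lookup f (lead_exp ord f))"

definition init_ideal :: "(('v \<Rightarrow>\<^sub>0 nat) \<Rightarrow> ('v \<Rightarrow>\<^sub>0 nat) \<Rightarrow> bool) \<Rightarrow> (('v \<Rightarrow>\<^sub>0 nat) \<Rightarrow>\<^sub>0 'a::comm_ring_1) set \<Rightarrow> (('v \<Rightarrow>\<^sub>0 nat) \<Rightarrow>\<^sub>0 'a) set" where
  "init_ideal ord I = gen_ideal {init_term ord f | f. f \<in> I \<and> f \<noteq> 0}"

definition coeff_ideal :: "(('v \<Rightarrow>\<^sub>0 nat) \<Rightarrow>\<^sub>0 'a::comm_ring_1) set \<Rightarrow> ('v \<Rightarrow>\<^sub>0 nat) \<Rightarrow> 'a set" where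
  "coeff_ideal J E = {c. Poly_Mapping.single E c \<in> J}"

text \<open>I \<inter> A, with A embedded in A[x] as constant polynomials.\<close>
definition contraction :: "(('v \<Rightarrow>\<^sub>0 nat) \<Rightarrow>\<^sub>0 'a::comm_ring_1) set \<Rightarrow> 'a set" where
  "contraction I = {c. Poly_Mapping.single 0 c \<in> I}"

text \<open>Elements of B are represented by fractions (a, s) with s \<notin> p; two fractions
  represent the same element of A_p/K_p iff u (a t - b s) \<in> K for some u \<notin> p.\<close>

definition loc_eq :: "'a::comm_ring_1 set \<Rightarrow> 'a set \<Rightarrow> 'a \<times> 'a \<Rightarrow> 'a \<times> 'a \<Rightarrow> bool" where
  "loc_eq p K x y \<longleftrightarrow> (\<exists>u. u \<notin> p \<and> u * (fst x * snd y - fst y * snd x) \<in> K)"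

definition frac_add :: "'a::comm_ring_1 \<times> 'a \<Rightarrow> 'a \<times> 'a \<Rightarrow> 'a \<times> 'a" where
  "frac_add x y = (fst x * snd y + fst y * snd x, snd x * snd y)"

definition frac_mult :: "'a::comm_ring_1 \<times> 'a \<Rightarrow> 'a \<times> 'a \<Rightarrow> 'a \<times> 'a" where
  "frac_mult x y = (fst x * fst y, snd x * snd y)"

text \<open>Representatives of the elements of the ideal J B of B generated by the image of J:
  the finite sums  \<Sum> b_i (c_i / 1)  with b_i \<in> B, c_i \<in> J.\<close>
inductive_set ext_ideal :: "'a::comm_ring_1 set \<Rightarrow> 'a set \<Rightarrow> ('a \<times> 'a) set" for p J where
  ext_zero: "(0, 1) \<in> ext_ideal p J"
| ext_step: "x \<in> ext_ideal p J \<Longrightarrow> c \<in> J \<Longrightarrow> snd b \<notin> p \<Longrightarrow>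
     frac_add x (frac_mult b (c, 1)) \<in> ext_ideal p J"

definition ext_is_zero :: "'a::comm_ring_1 set \<Rightarrow> 'a set \<Rightarrow> 'a set \<Rightarrow> bool" where
  "ext_is_zero p K J \<longleftrightarrow> (\<forall>x\<in>ext_ideal p J. loc_eq p K x (0, 1))"

definition ext_is_unit :: "'a::comm_ring_1 set \<Rightarrow> 'a set \<Rightarrow> 'a set \<Rightarrow> bool" where
  "ext_is_unit p K J \<longleftrightarrow> (\<exists>x\<in>ext_ideal p J. loc_eq p K x (1, 1))"

record ('r, 'm) amod =
  mcarrier :: "'m set"
  madd :: "'m \<Rightarrow> 'm \<Rightarrow> 'm"
  mzero :: "'m"
  msmult :: "'r \<Rightarrow> 'm \<Rightarrow> 'm"

definition is_amod :: "('r::comm_ring_1, 'm) amod \<Rightarrow> bool" where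
  "is_amod N \<longleftrightarrow>
     mzero N \<in> mcarrier N \<and>
     (\<forall>x\<in>mcarrier N. \<forall>y\<in>mcarrier N. madd N x y \<in> mcarrier N) \<and>
     (\<forall>a. \<forall>x\<in>mcarrier N. msmult N a x \<in> mcarrier N) \<and>
     (\<forall>x\<in>mcarrier N. \<forall>y\<in>mcarrier N. \<forall>z\<in>mcarrier N. madd N (madd N x y) z = madd N x (madd N y z)) \<and>
     (\<forall>x\<in>mcarrier N. \<forall>y\<in>mcarrier N. madd N x y = madd N y x) \<and>
     (\<forall>x\<in>mcarrier N. madd N (mzero N) x = x) \<and>
     (\<forall>x\<in>mcarrier N. \<exists>y\<in>mcarrier N. madd N x y = mzero N) \<and>
     (\<forall>a. \<forall>x\<in>mcarrier N. \<forall>y\<in>mcarrier N. msmult N a (madd N x y) = madd N (msmult N a x) (msmult N a y)) \<and>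
     (\<forall>a b. \<forall>x\<in>mcarrier N. msmult N (a + b) x = madd N (msmult N a x) (msmult N b x)) \<and>
     (\<forall>a b. \<forall>x\<in>mcarrier N. msmult N (a * b) x = msmult N a (msmult N b x)) \<and>
     (\<forall>x\<in>mcarrier N. msmult N 1 x = x)"

definition is_submod :: "'m set \<Rightarrow> ('r::comm_ring_1, 'm) amod \<Rightarrow> bool" where
  "is_submod S N \<longleftrightarrow> S \<subseteq> mcarrier N \<and> mzero N \<in> S \<and>
     (\<forall>x\<in>S. \<forall>y\<in>S. madd N x y \<in> S) \<and> (\<forall>a. \<forall>x\<in>S. msmult N a x \<in> S)"

text \<open>An A-module is an (A/K)-module iff it is annihilated by K.\<close>
definition annihilated :: "'r::comm_ring_1 set \<Rightarrow> ('r, 'm) amod \<Rightarrow> bool" where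
  "annihilated K N \<longleftrightarrow> (\<forall>k\<in>K. \<forall>x\<in>mcarrier N. msmult N k x = mzero N)"

inductive_set zspan :: "'b::ab_group_add set \<Rightarrow> 'b set" for S where
  zspan_zero: "0 \<in> zspan S"
| zspan_add: "x \<in> zspan S \<Longrightarrow> s \<in> S \<Longrightarrow> x + s \<in> zspan S"
| zspan_diff: "x \<in> zspan S \<Longrightarrow> y \<in> zspan S \<Longrightarrow> x - y \<in> zspan S"

definition tgen :: "'n \<Rightarrow> 'm \<Rightarrow> ('n \<times> 'm) \<Rightarrow>\<^sub>0 int" where
  "tgen n m = Poly_Mapping.single (n, m) 1"

text \<open>N \<otimes>_A M is the free abelian group on carrier N \<times> carrier M modulo the subgroup
  \<open>tensor_rel N M\<close>; an element (a formal sum t) is zero in N \<otimes> M iff t \<in> tensor_rel N M.\<close>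
definition tensor_rel :: "('r::comm_ring_1, 'n) amod \<Rightarrow> ('r, 'm) amod \<Rightarrow> (('n \<times> 'm) \<Rightarrow>\<^sub>0 int) set" where
  "tensor_rel N M = zspan (
      {tgen (madd N n n') m - tgen n m - tgen n' m | n n' m.
          n \<in> mcarrier N \<and> n' \<in> mcarrier N \<and> m \<in> mcarrier M}
    \<union> {tgen n (madd M m m') - tgen n m - tgen n m' | n m m'.
          n \<in> mcarrier N \<and> m \<in> mcarrier M \<and> m' \<in> mcarrier M}
    \<union> {tgen (msmult N a n) m - tgen n (msmult M a m) | a n m.
          n \<in> mcarrier N \<and> m \<in> mcarrier M})"

text \<open>M is flat over A/K: for every A/K-module N and submodule N' of N, the induced map
  N' \<otimes> M \<rightarrow> N \<otimes> M is injective.  (Tensor products over A/K of A/K-modules coincide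
  with tensor products over A.)  The test modules N range over modules whose carrier lives in
  the type 'n; in the theorem 'n is an arbitrary (universally quantified) type.\<close>
definition flat_over :: "'n itself \<Rightarrow> 'r::comm_ring_1 set \<Rightarrow> ('r, 'm) amod \<Rightarrow> bool" where
  "flat_over _ K M \<longleftrightarrow>
     (\<forall>(N::('r, 'n) amod) S. is_amod N \<and> annihilated K N \<and> is_submod S N \<longrightarrow>
        (\<forall>t. Poly_Mapping.keys t \<subseteq> S \<times> mcarrier M \<longrightarrow> t \<in> tensor_rel N M \<longrightarrow>
             t \<in> tensor_rel (N\<lparr>mcarrier := S\<rparr>) M))"

definition faithfully_flat_over :: "'n itself \<Rightarrow> 'r::comm_ring_1 set \<Rightarrow> ('r, 'm) amod \<Rightarrow> bool" where
  "faithfully_flat_over T K M \<longleftrightarrow> is_amod M \<and> annihilated K M \<and> flat_over T K M \<and>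
     (\<forall>N::('r, 'n) amod. is_amod N \<and> annihilated K N \<and>
        (\<forall>t. Poly_Mapping.keys t \<subseteq> mcarrier N \<times> mcarrier M \<longrightarrow> t \<in> tensor_rel N M) \<longrightarrow>
        mcarrier N = {mzero N})"

definition pcoset :: "'p::comm_ring_1 set \<Rightarrow> 'p \<Rightarrow> 'p set" where
  "pcoset I f = {f + i | i. i \<in> I}"

definition quot_amod :: "(('v \<Rightarrow>\<^sub>0 nat) \<Rightarrow>\<^sub>0 'a::comm_ring_1) set \<Rightarrow> ('a, (('v \<Rightarrow>\<^sub>0 nat) \<Rightarrow>\<^sub>0 'a) set) amod" where
  "quot_amod I = \<lparr> mcarrier = range (pcoset I),
      madd = (\<lambda>X Y. {x + y | x y. x \<in> X \<and> y \<in> Y}),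
      mzero = I,
      msmult = (\<lambda>a X. {Poly_Mapping.single 0 a * x + i | x i. x \<in> X \<and> i \<in> I}) \<rparr>"

end

theory Submission
  imports Defs Complex_Main
begin

lemma gen_ideal_is_ideal: "is_ideal (gen_ideal S)"
  unfolding gen_ideal_def is_ideal_def by auto

lemma gen_ideal_sub: "S \<subseteq> gen_ideal S"
  unfolding gen_ideal_def by auto

lemma gen_ideal_min: "is_ideal J \<Longrightarrow> S \<subseteq> J \<Longrightarrow> gen_ideal S \<subseteq> J"
  unfolding gen_ideal_def by auto

lemma ideal_0: "is_ideal J \<Longrightarrow> 0 \<in> J" unfolding is_ideal_def by auto
lemma ideal_add: "is_ideal J \<Longrightarrow> x \<in> J \<Longrightarrow> y \<in> J \<Longrightarrow> x + y \<in> J" unfolding is_ideal_def by auto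
lemma ideal_mult: "is_ideal J \<Longrightarrow> x \<in> J \<Longrightarrow> r * x \<in> J" unfolding is_ideal_def by auto
lemma ideal_mult_right: "is_ideal J \<Longrightarrow> x \<in> J \<Longrightarrow> x * r \<in> J"
  using ideal_mult[of J x r] by (simp add: mult.commute)
lemma ideal_neg: "is_ideal J \<Longrightarrow> x \<in> J \<Longrightarrow> - x \<in> J"
  using ideal_mult[of J x "-1"] by simp
lemma ideal_diff: "is_ideal J \<Longrightarrow> x \<in> J \<Longrightarrow> y \<in> J \<Longrightarrow> x - y \<in> J"
  using ideal_add[of J x "-y"] ideal_neg[of J y] by simp
lemma ideal_sum: "is_ideal J \<Longrightarrow> (\<And>i. i \<in> D \<Longrightarrow> f i \<in> J) \<Longrightarrow> sum f D \<in> J"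
  by (induction D rule: infinite_finite_induct) (auto simp: ideal_0 ideal_add)
lemma ideal_one: "is_ideal J \<Longrightarrow> 1 \<in> J \<Longrightarrow> J = UNIV"
  using ideal_mult[of J 1] by auto
lemma ideal_UNIV: "is_ideal UNIV" unfolding is_ideal_def by auto

section \<open>Existence of primes\<close>

lemma exists_prime:
  fixes Q :: "'a::comm_ring_1 set"
  assumes Q: "is_ideal Q" "1 \<notin> Q"
  shows "\<exists>p. prime_ideal p \<and> Q \<subseteq> p"
proof -
  define A where "A = {P::'a set. is_ideal P \<and> Q \<subseteq> P \<and> 1 \<notin> P}"
  have "\<exists>M\<in>A. \<forall>X\<in>A. M \<subseteq> X \<longrightarrow> X = M"
  proof (rule Zorn_Lemma2, intro ballI)
    fix C assume C: "C \<in> chains A"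
    show "\<exists>U\<in>A. \<forall>X\<in>C. X \<subseteq> U"
    proof (cases "C = {}")
      case True then show ?thesis using Q by (auto simp: A_def)
    next
      case False
      have ch: "\<forall>X\<in>C. \<forall>Y\<in>C. X \<subseteq> Y \<or> Y \<subseteq> X" "C \<subseteq> A"
        using C by (auto simp: chains_def chain_subset_def)
      have "is_ideal (\<Union>C)"
        unfolding is_ideal_def
      proof (intro conjI ballI allI)
        obtain X where "X \<in> C" using False by auto
        then show "0 \<in> \<Union>C" using ch(2) by (auto simp: A_def dest!: ideal_0)
      next
        fix x y assume "x \<in> \<Union>C" "y \<in> \<Union>C"
        then obtain X Y where XY: "X \<in> C" "Y \<in> C" "x \<in> X" "y \<in> Y" by auto
        have "X \<subseteq> Y \<or> Y \<subseteq> X" using ch(1) XY by auto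
        moreover have "is_ideal X" "is_ideal Y" using XY ch(2) by (auto simp: A_def)
        ultimately show "x + y \<in> \<Union>C" using XY by (metis UnionI ideal_add subsetD)
      next
        fix r x assume "x \<in> \<Union>C"
        then show "r * x \<in> \<Union>C" using ch(2) by (auto simp: A_def intro: ideal_mult)
      qed
      moreover have "Q \<subseteq> \<Union>C" "1 \<notin> \<Union>C" using False ch(2) by (auto simp: A_def)
      ultimately show ?thesis by (auto simp: A_def)
    qed
  qed
  then obtain M where M: "M \<in> A" "\<And>X. X \<in> A \<Longrightarrow> M \<subseteq> X \<Longrightarrow> X = M" by blast
  have Mi: "is_ideal M" "Q \<subseteq> M" "1 \<notin> M" using M(1) by (auto simp: A_def)
  have "prime_ideal M"
    unfolding prime_ideal_def
  proof (intro conjI allI impI)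
    show "is_ideal M" "M \<noteq> UNIV" using Mi by auto
  next
    fix a b assume ab: "a * b \<in> M"
    show "a \<in> M \<or> b \<in> M"
    proof (rule ccontr)
      assume na: "\<not> (a \<in> M \<or> b \<in> M)"
      define M' where "M' = {m + r * a | m r. m \<in> M}"
      have "is_ideal M'" unfolding is_ideal_def M'_def
      proof (intro conjI ballI allI)
        show "0 \<in> {m + r * a |m r. m \<in> M}" using Mi by (auto intro!: exI[of _ 0] ideal_0)
      next
        fix x y assume "x \<in> {m + r * a |m r. m \<in> M}" "y \<in> {m + r * a |m r. m \<in> M}"
        then obtain m1 r1 m2 r2 where "x = m1 + r1 * a" "y = m2 + r2 * a" "m1 \<in> M" "m2 \<in> M" by auto
        then show "x + y \<in> {m + r * a |m r. m \<in> M}"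
          by (intro CollectI exI[of _ "m1 + m2"] exI[of _ "r1 + r2"]) (auto simp: algebra_simps ideal_add Mi)
      next
        fix s x assume "x \<in> {m + r * a |m r. m \<in> M}"
        then obtain m1 r1 where "x = m1 + r1 * a" "m1 \<in> M" by auto
        then show "s * x \<in> {m + r * a |m r. m \<in> M}"
          by (intro CollectI exI[of _ "s * m1"] exI[of _ "s * r1"] conjI) (auto simp: distrib_left mult.assoc intro: ideal_mult Mi)
      qed
      moreover have "M \<subseteq> M'" unfolding M'_def by (auto, metis add_0_right mult_zero_left)
      moreover have "a \<in> M'"
      proof -
        have "a = 0 + 1 * a" by simp
        then show ?thesis using ideal_0[OF Mi(1)] unfolding M'_def by blast
      qed
      ultimately have "1 \<in> M'" using M(2)[of M'] Mi na unfolding A_def by auto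
      then obtain m r where mr: "1 = m + r * a" "m \<in> M" unfolding M'_def by auto
      have "b = b * m + r * (a * b)" using mr(1) by (metis mult.commute mult.left_commute mult_1 distrib_left)
      moreover have "b * m + r * (a * b) \<in> M" using Mi mr ab by (auto intro: ideal_add ideal_mult ideal_mult_right)
      ultimately show False using na by auto
    qed
  qed
  then show ?thesis using Mi by auto
qed

lemma ideal_preimage: "is_ideal W \<Longrightarrow> is_ideal {y. c * y \<in> W}"
  unfolding is_ideal_def by (auto simp: distrib_left mult.left_commute)

lemma gen_ideal_mono_gen: "is_ideal W \<Longrightarrow> S \<subseteq> W \<Longrightarrow> x \<in> gen_ideal S \<Longrightarrow> x \<in> W"
  using gen_ideal_min by blast

section \<open>Nakayama-type lemma\<close>

lemma nakayama_list:
  fixes J :: "'a::comm_ring_1 set"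
  assumes J: "is_ideal J"
  shows "is_ideal L \<Longrightarrow> (\<forall>g\<in>set G. g \<in> gen_ideal ({j*h | j h. j\<in>J \<and> h \<in> set G} \<union> L))
     \<Longrightarrow> \<exists>a. a - 1 \<in> J \<and> (\<forall>g\<in>set G. a*g \<in> L)"
proof (induction G arbitrary: L)
  case Nil
  then show ?case using ideal_0[OF J] by (intro exI[of _ 1]) auto
next
  case (Cons g G L)
  define L' where "L' = gen_ideal (L \<union> {g})"
  have L': "is_ideal L'" "L \<subseteq> L'" "g \<in> L'" unfolding L'_def using gen_ideal_is_ideal gen_ideal_sub[of "L \<union> {g}"] by auto
  have sub: "gen_ideal ({j*h | j h. j\<in>J \<and> h \<in> set (g#G)} \<union> L) \<subseteq> gen_ideal ({j*h | j h. j\<in>J \<and> h \<in> set G} \<union> L')"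
  proof (rule gen_ideal_min[OF gen_ideal_is_ideal])
    have "j * g \<in> gen_ideal ({j*h | j h. j\<in>J \<and> h \<in> set G} \<union> L')" for j
      using ideal_mult[OF L'(1) L'(3), of j] gen_ideal_sub[of "{j*h | j h. j\<in>J \<and> h \<in> set G} \<union> L'"] by blast
    note A = this
    have B: "{j*h | j h. j\<in>J \<and> h \<in> set G} \<union> L' \<subseteq> gen_ideal ({j*h | j h. j\<in>J \<and> h \<in> set G} \<union> L')"
      by (rule gen_ideal_sub)
    show "{j * h |j h. j \<in> J \<and> h \<in> set (g # G)} \<union> L \<subseteq> gen_ideal ({j * h |j h. j \<in> J \<and> h \<in> set G} \<union> L')"
    proof (rule subsetI)
      fix x assume "x \<in> {j * h |j h. j \<in> J \<and> h \<in> set (g # G)} \<union> L"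
      then consider (a) j where "x = j * g" | (b) j h where "x = j*h" "j \<in> J" "h \<in> set G" | (c) "x \<in> L"
        by auto
      then show "x \<in> gen_ideal ({j * h |j h. j \<in> J \<and> h \<in> set G} \<union> L')"
      proof cases
        case a then show ?thesis using A by simp
      next
        case b then show ?thesis using B by blast
      next
        case c then show ?thesis using B L'(2) by blast
      qed
    qed
  qed
  have "\<forall>g'\<in>set G. g' \<in> gen_ideal ({j*h | j h. j\<in>J \<and> h \<in> set G} \<union> L')"
  proof
    fix g' assume "g' \<in> set G"
    then have "g' \<in> gen_ideal ({j*h | j h. j\<in>J \<and> h \<in> set (g#G)} \<union> L)" using Cons.prems(2) by simp
    then show "g' \<in> gen_ideal ({j*h | j h. j\<in>J \<and> h \<in> set G} \<union> L')" using sub by (rule subsetD[rotated])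
  qed
  from Cons.IH[OF L'(1) this] obtain a' where a': "a' - 1 \<in> J" "\<forall>g'\<in>set G. a' * g' \<in> L'" by blast
  define W where "W = {j*g + l | j l. j\<in>J \<and> l\<in>L}"
  have W: "is_ideal W" unfolding W_def is_ideal_def
  proof (intro conjI ballI allI)
    show "0 \<in> {j * g + l |j l. j \<in> J \<and> l \<in> L}" using ideal_0[OF J] ideal_0[OF Cons.prems(1)]
      by (intro CollectI exI[of _ 0]) auto
  next
    fix x y assume "x \<in> {j * g + l |j l. j \<in> J \<and> l \<in> L}" "y \<in> {j * g + l |j l. j \<in> J \<and> l \<in> L}"
    then obtain j1 l1 j2 l2 where "x = j1 * g + l1" "y = j2 * g + l2" "j1 \<in> J" "j2 \<in> J" "l1 \<in> L" "l2 \<in> L" by auto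
    then show "x + y \<in> {j * g + l |j l. j \<in> J \<and> l \<in> L}"
    proof -
      have "x + y = (j1+j2) * g + (l1 + l2)" using \<open>x = j1 * g + l1\<close> \<open>y = j2 * g + l2\<close> by (simp add: algebra_simps)
      moreover have "j1+j2 \<in> J" "l1 + l2 \<in> L" using ideal_add J Cons.prems(1) \<open>j1 \<in> J\<close> \<open>l1 \<in> L\<close> \<open>j2 \<in> J\<close> \<open>l2 \<in> L\<close> by blast+
      ultimately show ?thesis unfolding mem_Collect_eq by (intro exI[of _ "j1+j2"] exI[of _ "l1+l2"] conjI)
    qed
  next
    fix r x assume "x \<in> {j * g + l |j l. j \<in> J \<and> l \<in> L}"
    then obtain j1 l1 where "x = j1 * g + l1" "j1 \<in> J" "l1 \<in> L" by auto
    then show "r * x \<in> {j * g + l |j l. j \<in> J \<and> l \<in> L}"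
    proof -
      have "r * x = (r*j1) * g + r * l1" using \<open>x = j1 * g + l1\<close> by (simp add: algebra_simps)
      moreover have "r*j1 \<in> J" "r * l1 \<in> L" using ideal_mult J Cons.prems(1) \<open>j1 \<in> J\<close> \<open>l1 \<in> L\<close> by blast+
      ultimately show ?thesis unfolding mem_Collect_eq by (intro exI[of _ "r*j1"] exI[of _ "r*l1"] conjI)
    qed
  qed
  have LW: "L \<subseteq> W" unfolding W_def using ideal_0[OF J] by force
  have jgW: "j * g \<in> W" if "j \<in> J" for j unfolding W_def using that ideal_0[OF Cons.prems(1)] by force
  have jL': "j * y \<in> W" if "j \<in> J" "y \<in> L'" for j y
  proof -
    have "L' \<subseteq> {y. j * y \<in> W}" unfolding L'_def
      using ideal_preimage[OF W, of j] ideal_mult[OF Cons.prems(1)] LW jgW[OF that(1)]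
      by (intro gen_ideal_min) auto
    then show ?thesis using that by auto
  qed
  have "gen_ideal ({j*h | j h. j\<in>J \<and> h \<in> set (g#G)} \<union> L) \<subseteq> {y. a' * y \<in> W}"
  proof (rule gen_ideal_min[OF ideal_preimage[OF W]], safe)
    fix j h assume jh: "j \<in> J" "h \<in> set (g # G)"
    show "a' * (j * h) \<in> W"
    proof (cases "h = g")
      case True then show ?thesis using jgW[of "a' * j"] ideal_mult[OF J jh(1)] by (simp add: mult.assoc)
    next
      case False then have "h \<in> set G" using jh by auto
      then have "j * (a' * h) \<in> W" using jL' jh(1) a'(2) by auto
      then show ?thesis by (simp add: mult.left_commute)
    qed
  next
    fix l assume "l \<in> L" then show "a' * l \<in> W" using LW ideal_mult[OF Cons.prems(1)] by auto
  qed
  then have "a' * g \<in> W" using Cons.prems(2) by auto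
  then obtain j0 l0 where jl: "a' * g = j0 * g + l0" "j0 \<in> J" "l0 \<in> L" unfolding W_def by auto
  define a where "a = (a' - j0) * a'"
  have "a - 1 = (a' - 1) * (a' + 1) - j0 * a'" unfolding a_def by (simp add: algebra_simps)
  moreover have "(a' - 1) * (a' + 1) - j0 * a' \<in> J"
    using ideal_diff[OF J ideal_mult_right[OF J a'(1)] ideal_mult_right[OF J jl(2)]] .
  ultimately have "a - 1 \<in> J" by simp
  moreover have "a * g \<in> L"
  proof -
    have "(a' - j0) * g = l0" using jl(1) by (simp add: algebra_simps)
    moreover have "a * g = a' * ((a' - j0) * g)" unfolding a_def by (simp add: ac_simps)
    ultimately have "a * g = a' * l0" by simp
    then show ?thesis using ideal_mult[OF Cons.prems(1) jl(3)] by simp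
  qed
  moreover have "a * g' \<in> L" if "g' \<in> set G" for g'
  proof -
    have "(a' - j0) * g \<in> L" using jl by (simp add: algebra_simps)
    then have "L' \<subseteq> {y. (a' - j0) * y \<in> L}" unfolding L'_def
      using ideal_preimage[OF Cons.prems(1), of "a' - j0"] ideal_mult[OF Cons.prems(1)]
      by (intro gen_ideal_min) auto
    then show ?thesis using a'(2) that unfolding a_def by (auto simp: mult.assoc)
  qed
  ultimately show ?case by auto
qed

lemma idempotent_gen:
  fixes J K :: "'a::comm_ring_1 set"
  assumes J: "is_ideal J" and K: "is_ideal K" and F: "finite F" "F \<subseteq> J" "J = gen_ideal F"
    and JJ: "J \<subseteq> gen_ideal ({a*b | a b. a \<in> J \<and> b \<in> J} \<union> K)"
  shows "\<exists>e\<in>J. \<forall>x\<in>J. (1 - e) * x \<in> K"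
proof -
  obtain G where G: "set G = F" using F(1) finite_list by blast
  define W where "W = gen_ideal ({j*h | j h. j\<in>J \<and> h \<in> set G} \<union> K)"
  have Wi: "is_ideal W" unfolding W_def by (rule gen_ideal_is_ideal)
  have "a * b \<in> W" if "a \<in> J" "b \<in> J" for a b
  proof -
    have "a * h \<in> W" if "h \<in> F" for h
      unfolding W_def by (rule subsetD[OF gen_ideal_sub]) (use that G \<open>a \<in> J\<close> in blast)
    then have "J \<subseteq> {y. a * y \<in> W}" unfolding F(3)
      using ideal_preimage[OF Wi, of a] by (intro gen_ideal_min) auto
    then show ?thesis using that by auto
  qed
  moreover have "K \<subseteq> W" unfolding W_def using gen_ideal_sub[of "{j*h | j h. j\<in>J \<and> h \<in> set G} \<union> K"] by auto
  ultimately have "gen_ideal ({a*b | a b. a \<in> J \<and> b \<in> J} \<union> K) \<subseteq> W"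
    by (intro gen_ideal_min[OF Wi]) auto
  then have "\<forall>g\<in>set G. g \<in> W" using JJ F(2) G by auto
  from nakayama_list[OF J K this[unfolded W_def]] obtain a where a: "a - 1 \<in> J" "\<forall>g\<in>set G. a*g \<in> K" by blast
  have "J \<subseteq> {y. a * y \<in> K}" unfolding F(3)
    using ideal_preimage[OF K, of a] a(2) G by (intro gen_ideal_min) auto
  moreover have "1 - a \<in> J" using ideal_neg[OF J a(1)] by simp
  ultimately show ?thesis by (intro bexI[of _ "1 - a"]) auto
qed

section \<open>Local-global\<close>

lemma ext_ideal_props:
  assumes J: "is_ideal J" and p: "prime_ideal p"
  shows "x \<in> ext_ideal p J \<Longrightarrow> fst x \<in> J \<and> snd x \<notin> p"
proof (induction rule: ext_ideal.induct)
  case ext_zero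
  have "1 \<notin> p" using p ideal_one unfolding prime_ideal_def by blast
  then show ?case using ideal_0[OF J] by simp
next
  case (ext_step x c b)
  have "fst x * (snd b * 1) + (fst b * c) * snd x \<in> J"
    using ext_step J by (metis ideal_add ideal_mult ideal_mult_right)
  moreover have "snd x * (snd b * 1) \<notin> p" using ext_step p unfolding prime_ideal_def by auto
  ultimately show ?case unfolding frac_add_def frac_mult_def by simp
qed

lemma local_global:
  fixes J K :: "'a::comm_ring_1 set"
  assumes J: "is_ideal J" and K: "is_ideal K" and KJ: "K \<subseteq> J"
    and H: "\<And>p. prime_ideal p \<Longrightarrow> ext_is_zero p K J \<or> ext_is_unit p K J"
  shows "J \<subseteq> gen_ideal ({a*b | a b. a \<in> J \<and> b \<in> J} \<union> K)"
proof
  fix x assume x: "x \<in> J"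
  define W where "W = gen_ideal ({a*b | a b. a \<in> J \<and> b \<in> J} \<union> K)"
  have Wi: "is_ideal W" unfolding W_def by (rule gen_ideal_is_ideal)
  have KW: "K \<subseteq> W" and JJW: "\<And>a b. a \<in> J \<Longrightarrow> b \<in> J \<Longrightarrow> a * b \<in> W"
    unfolding W_def using gen_ideal_sub[of "{a*b | a b. a \<in> J \<and> b \<in> J} \<union> K"] by auto
  define Q where "Q = {a. a * x \<in> W}"
  have Qi: "is_ideal Q"
  proof -
    have "Q = {y. x * y \<in> W}" unfolding Q_def by (simp add: mult.commute)
    then show ?thesis using ideal_preimage[OF Wi, of x] by simp
  qed
  show "x \<in> W"
  proof (rule ccontr)
    assume "x \<notin> W"
    then have "1 \<notin> Q" unfolding Q_def by auto
    from exists_prime[OF Qi this] obtain p where p: "prime_ideal p" "Q \<subseteq> p" by blast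
    have p1: "1 \<notin> p" using p(1) unfolding prime_ideal_def using ideal_one by blast
    from H[OF p(1)] show False
    proof
      assume z: "ext_is_zero p K J"
      have "(x, 1) = frac_add (0,1) (frac_mult (1,1) (x,1))" by (simp add: frac_add_def frac_mult_def)
      also have "\<dots> \<in> ext_ideal p J"
        using x p1 by (intro ext_step ext_zero) auto
      finally have "loc_eq p K (x, 1) (0, 1)" using z unfolding ext_is_zero_def by blast
      then obtain u where u: "u \<notin> p" "u * (x * 1 - 0 * 1) \<in> K"
        unfolding loc_eq_def by auto
      then have "u \<in> Q" unfolding Q_def using KW by auto
      then show False using u p(2) by auto
    next
      assume "ext_is_unit p K J"
      then obtain y u where y: "y \<in> ext_ideal p J" "u \<notin> p" "u * (fst y * 1 - 1 * snd y) \<in> K"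
        unfolding ext_is_unit_def loc_eq_def by auto
      have y2: "fst y \<in> J" "snd y \<notin> p" using ext_ideal_props[OF J p(1) y(1)] by auto
      have "u * snd y = u * fst y - u * (fst y * 1 - 1 * snd y)" by (simp add: algebra_simps)
      then have "u * snd y \<in> J" using y(3) KJ y2(1) J by (metis ideal_diff ideal_mult subsetD)
      then have "u * snd y \<in> Q" unfolding Q_def using JJW x by auto
      moreover have "u * snd y \<notin> p" using p(1) y(2) y2(2) unfolding prime_ideal_def by auto
      ultimately show False using p(2) by auto
    qed
  qed
qed


section \<open>Monomial orders\<close>

lemma mo_irrefl: "monomial_order ord \<Longrightarrow> \<not> ord E E" unfolding monomial_order_def by blast
lemma mo_trans: "monomial_order ord \<Longrightarrow> ord E F \<Longrightarrow> ord F G \<Longrightarrow> ord E G" unfolding monomial_order_def by blast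
lemma mo_total: "monomial_order ord \<Longrightarrow> E \<noteq> F \<Longrightarrow> ord E F \<or> ord F E" unfolding monomial_order_def by blast
lemma mo_compat: "monomial_order ord \<Longrightarrow> ord F E \<Longrightarrow> ord (G + F) (G + E)" unfolding monomial_order_def by blast
lemma mo_var: "monomial_order ord \<Longrightarrow> ord 0 (Poly_Mapping.single i 1)" unfolding monomial_order_def by blast

lemma mo_zero_min_aux:
  fixes D :: "'v::finite \<Rightarrow>\<^sub>0 nat" and n :: nat
  assumes mo: "monomial_order ord"
  shows "sum (Poly_Mapping.lookup D) UNIV = n \<Longrightarrow> D \<noteq> 0 \<Longrightarrow> ord 0 D"
proof (induction n arbitrary: D rule: less_induct)
  case (less n)
  have "\<exists>v. Poly_Mapping.lookup D v \<noteq> 0"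
  proof (rule ccontr)
    assume "\<not> (\<exists>v. Poly_Mapping.lookup D v \<noteq> 0)"
    then have "D = 0" by (intro poly_mapping_eqI) simp
    then show False using less.prems(2) by simp
  qed
  then obtain v where v: "Poly_Mapping.lookup D v \<noteq> 0" by blast
  define D' where "D' = D - Poly_Mapping.single v 1"
  have DD: "D = D' + Poly_Mapping.single v 1"
    by (rule poly_mapping_eqI) (use v in \<open>auto simp: D'_def lookup_add lookup_minus lookup_single when_def\<close>)
  have "sum (Poly_Mapping.lookup D) UNIV = sum (Poly_Mapping.lookup D') UNIV + 1"
  proof -
    have "sum (Poly_Mapping.lookup D) UNIV = sum (\<lambda>w. Poly_Mapping.lookup D' w + Poly_Mapping.lookup (Poly_Mapping.single v 1) w) UNIV"
      by (subst DD) (simp add: lookup_add)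
    also have "\<dots> = sum (Poly_Mapping.lookup D') UNIV + sum (\<lambda>w. Poly_Mapping.lookup (Poly_Mapping.single v (1::nat)) w) UNIV"
      by (simp add: sum.distrib)
    also have "sum (\<lambda>w. Poly_Mapping.lookup (Poly_Mapping.single v (1::nat)) w) UNIV = 1"
      by (simp add: lookup_single when_def)
    finally show ?thesis .
  qed
  then have lt: "sum (Poly_Mapping.lookup D') UNIV < n" using less.prems(1) by simp
  have o1: "ord D' D"
    using mo_compat[OF mo mo_var[OF mo, of v], of D'] DD by (simp add: add.commute)
  show ?case
  proof (cases "D' = 0")
    case True then show ?thesis using o1 by simp
  next
    case False
    then have "ord 0 D'" using less.IH[OF lt] by blast
    then show ?thesis using o1 mo_trans[OF mo] by blast
  qed
qed

lemma mo_zero_min: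
  fixes D :: "'v::finite \<Rightarrow>\<^sub>0 nat"
  assumes mo: "monomial_order ord"
  shows "D \<noteq> 0 \<Longrightarrow> ord 0 D"
  using mo_zero_min_aux[OF mo] by blast

lemma mo_zero_le:
  assumes mo: "monomial_order ord" shows "\<not> ord (D::'v::finite \<Rightarrow>\<^sub>0 nat) 0"
proof
  assume a: "ord D 0"
  then have "D \<noteq> 0" using mo_irrefl[OF mo] by auto
  then have "ord 0 D" using mo_zero_min[OF mo] by blast
  then show False using a mo_trans[OF mo] mo_irrefl[OF mo] by blast
qed

lemma mo_pointwise:
  fixes F G :: "'v::finite \<Rightarrow>\<^sub>0 nat"
  assumes mo: "monomial_order ord" and le: "\<And>v. Poly_Mapping.lookup F v \<le> Poly_Mapping.lookup G v"
  shows "F = G \<or> ord F G"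
proof -
  have GG: "G = F + (G - F)"
    by (rule poly_mapping_eqI) (use le in \<open>auto simp: lookup_add lookup_minus\<close>)
  show ?thesis
  proof (cases "G - F = 0")
    case True then show ?thesis using GG by simp
  next
    case False
    then have "ord 0 (G - F)" using mo_zero_min[OF mo] by blast
    from mo_compat[OF mo this, of F] show ?thesis using GG by simp
  qed
qed

lemma nat_mono_subseq:
  fixes a :: "nat \<Rightarrow> nat"
  shows "\<exists>g::nat\<Rightarrow>nat. strict_mono g \<and> (\<forall>i j. i \<le> j \<longrightarrow> a (g i) \<le> a (g j))"
proof -
  obtain f :: "nat \<Rightarrow> nat" where f: "strict_mono f" "monoseq (\<lambda>n. a (f n))" using seq_monosub by blast
  show ?thesis
  proof (cases "\<forall>m. \<forall>n\<ge>m. a (f m) \<le> a (f n)")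
    case True
    have "\<forall>i j. i \<le> j \<longrightarrow> a (f i) \<le> a (f j)" using True by simp
    with f(1) have "strict_mono f \<and> (\<forall>i j. i \<le> j \<longrightarrow> a (f i) \<le> a (f j))" by simp
    then show ?thesis by blast
  next
    case False
    then have dec: "\<forall>m. \<forall>n\<ge>m. a (f n) \<le> a (f m)" using f(2) unfolding monoseq_def by blast
    define v where "v = (LEAST v. v \<in> range (\<lambda>n. a (f n)))"
    have "v \<in> range (\<lambda>n. a (f n))" unfolding v_def by (rule LeastI[of _ "a (f 0)"]) simp
    then obtain N where N: "a (f N) = v" by auto
    have vmin: "v \<le> a (f n)" for n unfolding v_def by (rule Least_le) auto
    have const: "a (f n) = v" if "n \<ge> N" for n
    proof -
      have "a (f n) \<le> a (f N)" using dec that by blast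
      then show ?thesis using vmin[of n] N by linarith
    qed
    have "strict_mono (\<lambda>i. f (i + N))" using f(1) unfolding strict_mono_def by simp
    moreover have "a (f (i + N)) \<le> a (f (j + N))" for i j using const[of "i+N"] const[of "j+N"] by simp
    ultimately show ?thesis by blast
  qed
qed

lemma dickson_aux:
  fixes s :: "nat \<Rightarrow> ('v \<Rightarrow>\<^sub>0 nat)"
  assumes "finite V"
  shows "\<exists>f::nat\<Rightarrow>nat. strict_mono f \<and> (\<forall>v\<in>V. \<forall>i j. i \<le> j \<longrightarrow> Poly_Mapping.lookup (s (f i)) v \<le> Poly_Mapping.lookup (s (f j)) v)"
  using assms
proof (induction V rule: finite_induct)
  case empty
  have "strict_mono (id :: nat \<Rightarrow> nat)" by (simp add: strict_mono_def)
  then show ?case by blast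
next
  case (insert w V)
  then obtain f :: "nat \<Rightarrow> nat" where f: "strict_mono f" "\<forall>v\<in>V. \<forall>i j. i \<le> j \<longrightarrow> Poly_Mapping.lookup (s (f i)) v \<le> Poly_Mapping.lookup (s (f j)) v" by blast
  obtain g :: "nat \<Rightarrow> nat" where g: "strict_mono g" "\<forall>i j. i \<le> j \<longrightarrow> Poly_Mapping.lookup (s (f (g i))) w \<le> Poly_Mapping.lookup (s (f (g j))) w"
    using nat_mono_subseq[of "\<lambda>n. Poly_Mapping.lookup (s (f n)) w"] by blast
  have "strict_mono (f \<circ> g)" using f(1) g(1) by (rule strict_mono_o)
  moreover have "\<forall>v\<in>insert w V. \<forall>i j. i \<le> j \<longrightarrow> Poly_Mapping.lookup (s ((f \<circ> g) i)) v \<le> Poly_Mapping.lookup (s ((f \<circ> g) j)) v"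
    using f(2) g strict_mono_less_eq[OF g(1)] by auto
  ultimately show ?case by blast
qed

lemma dickson:
  fixes s :: "nat \<Rightarrow> ('v::finite \<Rightarrow>\<^sub>0 nat)"
  shows "\<exists>i j. i < j \<and> (\<forall>v. Poly_Mapping.lookup (s i) v \<le> Poly_Mapping.lookup (s j) v)"
proof -
  obtain f :: "nat \<Rightarrow> nat" where f: "strict_mono f" "\<forall>v. \<forall>i j. i \<le> j \<longrightarrow> Poly_Mapping.lookup (s (f i)) v \<le> Poly_Mapping.lookup (s (f j)) v"
    using dickson_aux[of UNIV s] by auto
  then show ?thesis by (intro exI[of _ "f 0"] exI[of _ "f 1"]) (auto simp: strict_mono_def)
qed

lemma mo_wf:
  assumes mo: "monomial_order (ord :: ('v::finite \<Rightarrow>\<^sub>0 nat) \<Rightarrow> _)"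
  shows "wf {(F, E). ord F E}"
proof (rule ccontr)
  assume "\<not> wf {(F, E). ord F E}"
  then obtain s where s: "\<And>i. ord (s (Suc i)) (s i)" unfolding wf_iff_no_infinite_down_chain by auto
  have chain: "ord (s (i + Suc k)) (s i)" for i k
  proof (induction k)
    case 0 then show ?case using s by simp
  next
    case (Suc k) then show ?case using s[of "i + Suc k"] mo_trans[OF mo] by simp
  qed
  obtain i j where ij: "i < j" "\<forall>v. Poly_Mapping.lookup (s i) v \<le> Poly_Mapping.lookup (s j) v" using dickson[of s] by blast
  have "ord (s j) (s i)" using chain[of i "j - i - 1"] ij(1) by simp
  moreover have "s i = s j \<or> ord (s i) (s j)" using mo_pointwise[OF mo] ij(2) by blast
  ultimately show False using mo_irrefl[OF mo] mo_trans[OF mo] by metis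
qed

lemma mo_max:
  assumes mo: "monomial_order ord" and "finite X" "X \<noteq> {}"
  shows "\<exists>M\<in>X. \<forall>F\<in>X. F \<noteq> M \<longrightarrow> ord F M"
  using assms(2,3)
proof (induction X rule: finite_ne_induct)
  case (singleton x) then show ?case by auto
next
  case (insert x X)
  then obtain M where M: "M \<in> X" "\<forall>F\<in>X. F \<noteq> M \<longrightarrow> ord F M" by blast
  show ?case
  proof (cases "ord x M")
    case True then show ?thesis using M by auto
  next
    case False
    then have "x = M \<or> ord M x" using mo_total[OF mo] by blast
    then show ?thesis using M insert.hyps mo_trans[OF mo] by (intro bexI[of _ x]) auto
  qed
qed


lemma poly_expand: "g = (\<Sum>E\<in>Poly_Mapping.keys g. Poly_Mapping.single E (Poly_Mapping.lookup g E))"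
proof (rule poly_mapping_eqI)
  fix k
  have "Poly_Mapping.lookup (\<Sum>E\<in>Poly_Mapping.keys g. Poly_Mapping.single E (Poly_Mapping.lookup g E)) k
      = (\<Sum>E\<in>Poly_Mapping.keys g. (Poly_Mapping.lookup g E when E = k))"
    by (simp add: lookup_sum lookup_single)
  also have "\<dots> = Poly_Mapping.lookup g k"
  proof (cases "k \<in> Poly_Mapping.keys g")
    case True then show ?thesis by (simp add: when_def sum.delta)
  next
    case False then show ?thesis by (auto simp: when_def in_keys_iff intro!: sum.neutral)
  qed
  finally show "Poly_Mapping.lookup g k = Poly_Mapping.lookup (\<Sum>E\<in>Poly_Mapping.keys g. Poly_Mapping.single E (Poly_Mapping.lookup g E)) k" by simp
qed

lemma single_mult_expand:
  fixes g :: "('k::comm_monoid_add \<Rightarrow>\<^sub>0 'a::comm_ring_1)"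
  shows "Poly_Mapping.single F c * g = (\<Sum>E\<in>Poly_Mapping.keys g. Poly_Mapping.single (F + E) (c * Poly_Mapping.lookup g E))"
proof -
  have "Poly_Mapping.single F c * g = Poly_Mapping.single F c * (\<Sum>E\<in>Poly_Mapping.keys g. Poly_Mapping.single E (Poly_Mapping.lookup g E))"
    by (subst poly_expand[of g]) simp
  also have "\<dots> = (\<Sum>E\<in>Poly_Mapping.keys g. Poly_Mapping.single F c * Poly_Mapping.single E (Poly_Mapping.lookup g E))"
    by (simp add: sum_distrib_left)
  also have "\<dots> = (\<Sum>E\<in>Poly_Mapping.keys g. Poly_Mapping.single (F + E) (c * Poly_Mapping.lookup g E))"
    by (simp add: mult_single)
  finally show ?thesis .
qed

lemma lookup_single_mult:
  fixes g :: "('k::cancel_comm_monoid_add \<Rightarrow>\<^sub>0 'a::comm_ring_1)"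
  shows "Poly_Mapping.lookup (Poly_Mapping.single F c * g) (F + E) = c * Poly_Mapping.lookup g E"
proof -
  have "Poly_Mapping.lookup (Poly_Mapping.single F c * g) (F + E)
      = (\<Sum>E'\<in>Poly_Mapping.keys g. (c * Poly_Mapping.lookup g E' when F + E' = F + E))"
    by (subst single_mult_expand) (simp add: lookup_sum lookup_single)
  also have "\<dots> = (\<Sum>E'\<in>Poly_Mapping.keys g. (c * Poly_Mapping.lookup g E' when E' = E))"
    by simp
  also have "\<dots> = c * Poly_Mapping.lookup g E"
  proof (cases "E \<in> Poly_Mapping.keys g")
    case True then show ?thesis by (simp add: when_def sum.delta)
  next
    case False then show ?thesis by (auto simp: when_def in_keys_iff intro!: sum.neutral)
  qed
  finally show ?thesis .
qed

lemma keys_single_mult: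
  fixes g :: "('k::comm_monoid_add \<Rightarrow>\<^sub>0 'a::comm_ring_1)"
  shows "Poly_Mapping.keys (Poly_Mapping.single F c * g) \<subseteq> (\<lambda>E. F + E) ` Poly_Mapping.keys g"
proof
  fix x assume "x \<in> Poly_Mapping.keys (Poly_Mapping.single F c * g)"
  then obtain a b where "x = a + b" "a \<in> Poly_Mapping.keys (Poly_Mapping.single F c)" "b \<in> Poly_Mapping.keys g"
    using keys_mult by blast
  then show "x \<in> (\<lambda>E. F + E) ` Poly_Mapping.keys g" by (auto split: if_splits)
qed

lemma lookup_single0_mult:
  fixes g :: "('k::cancel_comm_monoid_add \<Rightarrow>\<^sub>0 'a::comm_ring_1)"
  shows "Poly_Mapping.lookup (Poly_Mapping.single 0 c * g) E = c * Poly_Mapping.lookup g E"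
  using lookup_single_mult[of 0 c g E] by simp

lemma lookup_single_mult_outside:
  fixes g :: "('k::cancel_comm_monoid_add \<Rightarrow>\<^sub>0 'a::comm_ring_1)"
  assumes "\<not> (\<exists>E'. E = F + E')"
  shows "Poly_Mapping.lookup (Poly_Mapping.single F c * g) E = 0"
proof -
  have "E \<notin> Poly_Mapping.keys (Poly_Mapping.single F c * g)" using keys_single_mult[of F c g] assms by blast
  then show ?thesis by (simp add: in_keys_iff)
qed


definition Lset :: "(('v \<Rightarrow>\<^sub>0 nat) \<Rightarrow> ('v \<Rightarrow>\<^sub>0 nat) \<Rightarrow> bool) \<Rightarrow> (('v \<Rightarrow>\<^sub>0 nat) \<Rightarrow>\<^sub>0 'a::comm_ring_1) set \<Rightarrow> ('v \<Rightarrow>\<^sub>0 nat) \<Rightarrow> 'a set" where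
  "Lset ord I E = {c. \<exists>f\<in>I. Poly_Mapping.lookup f E = c \<and> (\<forall>F\<in>Poly_Mapping.keys f. F \<noteq> E \<longrightarrow> ord F E)}"

lemma Lset_0: "is_ideal I \<Longrightarrow> 0 \<in> Lset ord I E"
  unfolding Lset_def using ideal_0[of I] by force

lemma Lset_add:
  assumes I: "is_ideal I" and a: "a \<in> Lset ord I E" and b: "b \<in> Lset ord I E"
  shows "a + b \<in> Lset ord I E"
proof -
  obtain f where f: "f \<in> I" "Poly_Mapping.lookup f E = a" "\<forall>F\<in>Poly_Mapping.keys f. F \<noteq> E \<longrightarrow> ord F E"
    using a unfolding Lset_def by blast
  obtain g where g: "g \<in> I" "Poly_Mapping.lookup g E = b" "\<forall>F\<in>Poly_Mapping.keys g. F \<noteq> E \<longrightarrow> ord F E"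
    using b unfolding Lset_def by blast
  have "f + g \<in> I" using ideal_add[OF I f(1) g(1)] .
  moreover have "Poly_Mapping.lookup (f + g) E = a + b" using f(2) g(2) by (simp add: lookup_add)
  moreover have "\<forall>F\<in>Poly_Mapping.keys (f + g). F \<noteq> E \<longrightarrow> ord F E"
    using f(3) g(3) keys_add[of f g] by blast
  ultimately show ?thesis unfolding Lset_def by blast
qed

lemma Lset_sum:
  assumes I: "is_ideal I"
  shows "(\<And>i. i \<in> D \<Longrightarrow> h i \<in> Lset ord I E) \<Longrightarrow> sum h D \<in> Lset ord I E"
  by (induction D rule: infinite_finite_induct) (auto simp: Lset_0[OF I] Lset_add[OF I])

lemma Lset_shift:
  assumes mo: "monomial_order ord" and I: "is_ideal I" and c: "c \<in> Lset ord I E"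
  shows "r * c \<in> Lset ord I (F + E)"
proof -
  obtain f where f: "f \<in> I" "Poly_Mapping.lookup f E = c" "\<forall>F\<in>Poly_Mapping.keys f. F \<noteq> E \<longrightarrow> ord F E"
    using c unfolding Lset_def by blast
  have "Poly_Mapping.single F r * f \<in> I" using ideal_mult[OF I f(1)] .
  moreover have "Poly_Mapping.lookup (Poly_Mapping.single F r * f) (F + E) = r * c"
    using f(2) by (simp add: lookup_single_mult)
  moreover have "\<forall>G\<in>Poly_Mapping.keys (Poly_Mapping.single F r * f). G \<noteq> F + E \<longrightarrow> ord G (F + E)"
  proof (intro ballI impI)
    fix G assume G: "G \<in> Poly_Mapping.keys (Poly_Mapping.single F r * f)" "G \<noteq> F + E"
    then obtain G' where G': "G = F + G'" "G' \<in> Poly_Mapping.keys f" using keys_single_mult by blast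
    then have "G' \<noteq> E" using G(2) by auto
    then have "ord G' E" using f(3) G'(2) by blast
    then show "ord G (F + E)" using mo_compat[OF mo] G'(1) by blast
  qed
  ultimately show ?thesis unfolding Lset_def by blast
qed

lemma lead_exp_eq:
  assumes mo: "monomial_order ord" and E: "E \<in> Poly_Mapping.keys f" "\<forall>F\<in>Poly_Mapping.keys f. F \<noteq> E \<longrightarrow> ord F E"
  shows "lead_exp ord f = E"
  unfolding lead_exp_def
proof (rule the_equality)
  show "E \<in> Poly_Mapping.keys f \<and> (\<forall>F\<in>Poly_Mapping.keys f. F \<noteq> E \<longrightarrow> ord F E)" using E by blast
next
  fix E' assume E': "E' \<in> Poly_Mapping.keys f \<and> (\<forall>F\<in>Poly_Mapping.keys f. F \<noteq> E' \<longrightarrow> ord F E')"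
  show "E' = E"
  proof (rule ccontr)
    assume "E' \<noteq> E"
    have "ord E' E" using E(2) E' \<open>E' \<noteq> E\<close> by blast
    moreover have "ord E E'" using E(1) E' \<open>E' \<noteq> E\<close> by auto
    ultimately show False using mo_trans[OF mo] mo_irrefl[OF mo] by blast
  qed
qed

lemma lead_exp_prop:
  assumes mo: "monomial_order ord" and f: "f \<noteq> 0"
  shows "lead_exp ord f \<in> Poly_Mapping.keys f \<and> (\<forall>F\<in>Poly_Mapping.keys f. F \<noteq> lead_exp ord f \<longrightarrow> ord F (lead_exp ord f))"
proof -
  have "Poly_Mapping.keys f \<noteq> {}" using f by simp
  from mo_max[OF mo finite_keys this] obtain M where M: "M \<in> Poly_Mapping.keys f" "\<forall>F\<in>Poly_Mapping.keys f. F \<noteq> M \<longrightarrow> ord F M" by blast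
  with lead_exp_eq[OF mo M] show ?thesis by simp
qed

lemma init_ideal_Lset:
  assumes mo: "monomial_order ord" and I: "is_ideal I" and x: "x \<in> init_ideal ord I"
  shows "Poly_Mapping.lookup x E \<in> Lset ord I E"
proof -
  define X where "X = {x. \<forall>E. Poly_Mapping.lookup x E \<in> Lset ord I E}"
  have "is_ideal X" unfolding is_ideal_def
  proof (intro conjI ballI allI)
    show "0 \<in> X" unfolding X_def using Lset_0[OF I] by simp
  next
    fix a b assume "a \<in> X" "b \<in> X" then show "a + b \<in> X" unfolding X_def using Lset_add[OF I] by (simp add: lookup_add)
  next
    fix r a assume a: "a \<in> X"
    have "r * a = (\<Sum>F\<in>Poly_Mapping.keys r. Poly_Mapping.single F (Poly_Mapping.lookup r F) * a)"
      by (subst poly_expand[of r]) (simp add: sum_distrib_right)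
    moreover have "Poly_Mapping.lookup (\<Sum>F\<in>Poly_Mapping.keys r. Poly_Mapping.single F (Poly_Mapping.lookup r F) * a) E \<in> Lset ord I E" for E
      unfolding lookup_sum
    proof (rule Lset_sum[OF I])
      fix F
      show "Poly_Mapping.lookup (Poly_Mapping.single F (Poly_Mapping.lookup r F) * a) E \<in> Lset ord I E"
      proof (cases "\<exists>E'. E = F + E'")
        case True
        then obtain E' where E': "E = F + E'" by blast
        have "Poly_Mapping.lookup a E' \<in> Lset ord I E'" using a unfolding X_def by blast
        from Lset_shift[OF mo I this, of "Poly_Mapping.lookup r F" F] show ?thesis
          using E' by (simp add: lookup_single_mult)
      next
        case False
        have "Poly_Mapping.lookup (Poly_Mapping.single F (Poly_Mapping.lookup r F) * a) E = 0"
          by (rule lookup_single_mult_outside) (use False in blast)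
        then show ?thesis using Lset_0[OF I] by simp
      qed
    qed
    ultimately show "r * a \<in> X" unfolding X_def by simp
  qed
  moreover have "{init_term ord f | f. f \<in> I \<and> f \<noteq> 0} \<subseteq> X"
  proof safe
    fix f assume f: "f \<in> I" "f \<noteq> 0"
    show "init_term ord f \<in> X" unfolding X_def
    proof (intro CollectI allI)
      fix E
      show "Poly_Mapping.lookup (init_term ord f) E \<in> Lset ord I E"
      proof (cases "E = lead_exp ord f")
        case True
        then have "Poly_Mapping.lookup (init_term ord f) E = Poly_Mapping.lookup f E" by (simp add: init_term_def)
        moreover have "Poly_Mapping.lookup f E \<in> Lset ord I E"
          using lead_exp_prop[OF mo f(2)] True f(1) unfolding Lset_def by blast
        ultimately show ?thesis by simp
      next
        case False
        then show ?thesis by (simp add: init_term_def lookup_single_not_eq Lset_0[OF I])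
      qed
    qed
  qed
  ultimately have "init_ideal ord I \<subseteq> X" unfolding init_ideal_def by (rule gen_ideal_min)
  then show ?thesis using x unfolding X_def by blast
qed

lemma Lset_coeff:
  assumes mo: "monomial_order ord" and I: "is_ideal I" and c: "c \<in> Lset ord I E"
  shows "c \<in> coeff_ideal (init_ideal ord I) E"
proof (cases "c = 0")
  case True
  then show ?thesis unfolding coeff_ideal_def init_ideal_def using ideal_0[OF gen_ideal_is_ideal] by simp
next
  case False
  obtain f where f: "f \<in> I" "Poly_Mapping.lookup f E = c" "\<forall>F\<in>Poly_Mapping.keys f. F \<noteq> E \<longrightarrow> ord F E"
    using c unfolding Lset_def by blast
  have Ek: "E \<in> Poly_Mapping.keys f" using f(2) False by (simp add: in_keys_iff)
  then have "f \<noteq> 0" by auto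
  have "lead_exp ord f = E" using lead_exp_eq[OF mo Ek f(3)] .
  then have "init_term ord f = Poly_Mapping.single E c" using f(2) by (simp add: init_term_def)
  moreover have "init_term ord f \<in> {init_term ord f | f. f \<in> I \<and> f \<noteq> 0}" using f(1) \<open>f \<noteq> 0\<close> by blast
  ultimately have "Poly_Mapping.single E c \<in> {init_term ord f | f. f \<in> I \<and> f \<noteq> 0}" by simp
  then show ?thesis unfolding coeff_ideal_def init_ideal_def using gen_ideal_sub[of "{init_term ord f | f. f \<in> I \<and> f \<noteq> 0}"] by blast
qed

lemma coeff_Lset:
  assumes mo: "monomial_order ord" and I: "is_ideal I" and c: "c \<in> coeff_ideal (init_ideal ord I) E"
  shows "c \<in> Lset ord I E"
  using init_ideal_Lset[OF mo I, of "Poly_Mapping.single E c" E] c unfolding coeff_ideal_def by simp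

lemma coeff_ideal_is_ideal:
  assumes J: "is_ideal J"
  shows "is_ideal (coeff_ideal J E)"
  unfolding is_ideal_def coeff_ideal_def
proof (intro conjI ballI allI; clarsimp)
  show "0 \<in> J" using ideal_0[OF J] .
next
  fix x y assume "Poly_Mapping.single E x \<in> J" "Poly_Mapping.single E y \<in> J"
  then show "Poly_Mapping.single E (x + y) \<in> J" using ideal_add[OF J] by (simp add: single_add)
next
  fix r x assume "Poly_Mapping.single E x \<in> J"
  then have "Poly_Mapping.single 0 r * Poly_Mapping.single E x \<in> J" using ideal_mult[OF J] by blast
  then show "Poly_Mapping.single E (r * x) \<in> J" by (simp add: mult_single)
qed

lemma contraction_is_ideal: "is_ideal I \<Longrightarrow> is_ideal (contraction I)"
  using coeff_ideal_is_ideal[of I 0] unfolding coeff_ideal_def contraction_def by simp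

lemma contraction_Lset:
  assumes mo: "monomial_order ord" and I: "is_ideal I" and k: "k \<in> contraction I"
  shows "k \<in> Lset ord I E"
proof -
  have "k \<in> Lset ord I 0" unfolding Lset_def using k unfolding contraction_def
    by (intro CollectI bexI[of _ "Poly_Mapping.single 0 k"]) (auto split: if_splits)
  from Lset_shift[OF mo I this, of 1 E] show ?thesis by simp
qed

lemma Lset0_contraction:
  fixes I :: "(('v::finite \<Rightarrow>\<^sub>0 nat) \<Rightarrow>\<^sub>0 'a::comm_ring_1) set"
  assumes mo: "monomial_order ord" and I: "is_ideal I" and c: "c \<in> Lset ord I 0"
  shows "c \<in> contraction I"
proof -
  obtain f where f: "f \<in> I" "Poly_Mapping.lookup f 0 = c" "\<forall>F\<in>Poly_Mapping.keys f. F \<noteq> 0 \<longrightarrow> ord F 0"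
    using c unfolding Lset_def by blast
  have "Poly_Mapping.keys f \<subseteq> {0}" using f(3) mo_zero_le[OF mo] by blast
  then have "f = Poly_Mapping.single 0 c"
    by (intro poly_mapping_eqI) (use f(2) in \<open>auto simp: lookup_single when_def in_keys_iff\<close>)
  then show ?thesis using f(1) unfolding contraction_def by simp
qed


definition Jc where "Jc ord I E = coeff_ideal (init_ideal ord I) E"
definition eid where "eid ord I E = (SOME e. e \<in> Jc ord I E \<and> (\<forall>x\<in>Jc ord I E. (1 - e) * x \<in> contraction I))"
definition stdp where "stdp ord I g \<longleftrightarrow> (\<forall>E. Poly_Mapping.lookup g E * eid ord I E \<in> contraction I)"

locale setting =
  fixes ord :: "('v::finite \<Rightarrow>\<^sub>0 nat) \<Rightarrow> ('v \<Rightarrow>\<^sub>0 nat) \<Rightarrow> bool"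
    and I :: "(('v \<Rightarrow>\<^sub>0 nat) \<Rightarrow>\<^sub>0 'a::comm_ring_1) set"
  assumes noeth: "noetherian TYPE('a)"
    and mo: "monomial_order ord"
    and I: "is_ideal I"
    and H: "\<And>p E. prime_ideal p \<Longrightarrow>
           ext_is_zero p (contraction I) (coeff_ideal (init_ideal ord I) E)
         \<or> ext_is_unit p (contraction I) (coeff_ideal (init_ideal ord I) E)"
begin

abbreviation "K \<equiv> contraction I"
abbreviation "J \<equiv> Jc ord I"
abbreviation "e \<equiv> eid ord I"
abbreviation "std \<equiv> stdp ord I"

lemma K_ideal: "is_ideal K" using contraction_is_ideal[OF I] .
lemma J_ideal: "is_ideal (J E)" unfolding Jc_def by (rule coeff_ideal_is_ideal) (unfold init_ideal_def, rule gen_ideal_is_ideal)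
lemma J_Lset: "J E = Lset ord I E"
  unfolding Jc_def using Lset_coeff[OF mo I] coeff_Lset[OF mo I] by blast
lemma K_J: "K \<subseteq> J E" unfolding J_Lset using contraction_Lset[OF mo I] by blast

lemma e_exists: "\<exists>e. e \<in> J E \<and> (\<forall>x\<in>J E. (1 - e) * x \<in> K)"
proof -
  obtain F where F: "finite F" "F \<subseteq> J E" "J E = gen_ideal F"
    using noeth J_ideal[of E] unfolding noetherian_def by blast
  have "J E \<subseteq> gen_ideal ({a*b | a b. a \<in> J E \<and> b \<in> J E} \<union> K)"
    by (rule local_global[OF J_ideal K_ideal K_J]) (use H in \<open>simp add: Jc_def\<close>)
  from idempotent_gen[OF J_ideal K_ideal F this] show ?thesis by blast
qed

lemma e_prop: "e E \<in> J E" "\<And>x. x \<in> J E \<Longrightarrow> (1 - e E) * x \<in> K"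
  using someI_ex[OF e_exists[of E]] unfolding eid_def by blast+

lemma e_idem: "(1 - e E) * e E \<in> K" using e_prop by blast

lemma e0: "e 0 \<in> K"
  using e_prop(1)[of 0] Lset0_contraction[OF mo I] unfolding J_Lset by blast

lemma K_coeff_split: "d \<in> J E \<Longrightarrow> d * e E \<in> K \<Longrightarrow> d \<in> K"
proof -
  assume d: "d \<in> J E" "d * e E \<in> K"
  have "d = d * e E + (1 - e E) * d" by (simp add: algebra_simps)
  then show "d \<in> K" using ideal_add[OF K_ideal d(2) e_prop(2)[OF d(1)]] by simp
qed

lemma K_poly: "(\<And>E. Poly_Mapping.lookup f E \<in> K) \<Longrightarrow> f \<in> I"
proof -
  assume k: "\<And>E. Poly_Mapping.lookup f E \<in> K"
  have "Poly_Mapping.single E (Poly_Mapping.lookup f E) \<in> I" for E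
  proof -
    have "Poly_Mapping.single E 1 * Poly_Mapping.single 0 (Poly_Mapping.lookup f E) \<in> I"
      using ideal_mult[OF I, of "Poly_Mapping.single 0 (Poly_Mapping.lookup f E)"] k[of E] unfolding contraction_def by blast
    then show ?thesis by (simp add: mult_single)
  qed
  then have "(\<Sum>E\<in>Poly_Mapping.keys f. Poly_Mapping.single E (Poly_Mapping.lookup f E)) \<in> I"
    by (intro ideal_sum[OF I])
  then show "f \<in> I" using poly_expand[of f] by simp
qed

lemma std_0: "std 0" unfolding stdp_def using ideal_0[OF K_ideal] by simp
lemma std_add: "std g \<Longrightarrow> std h \<Longrightarrow> std (g + h)"
  unfolding stdp_def by (simp add: lookup_add distrib_right ideal_add[OF K_ideal])
lemma std_diff: "std g \<Longrightarrow> std h \<Longrightarrow> std (g - h)"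
  unfolding stdp_def by (simp add: lookup_minus left_diff_distrib ideal_diff[OF K_ideal])
lemma std_smult: "std g \<Longrightarrow> std (Poly_Mapping.single 0 a * g)"
  unfolding stdp_def by (simp add: lookup_single0_mult mult.assoc ideal_mult[OF K_ideal])
lemma std_one: "std (Poly_Mapping.single 0 1)"
  unfolding stdp_def
proof
  fix E show "Poly_Mapping.lookup (Poly_Mapping.single 0 1) E * e E \<in> K"
    using e0 ideal_0[OF K_ideal] by (cases "E = 0") (auto simp: lookup_one)
qed

lemma std_unique:
  assumes h: "std h" "h \<in> I"
  shows "Poly_Mapping.lookup h E \<in> K"
proof (rule ccontr)
  assume nE: "Poly_Mapping.lookup h E \<notin> K"
  define B where "B = {F \<in> Poly_Mapping.keys h. Poly_Mapping.lookup h F \<notin> K}"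
  have "E \<in> B" using nE ideal_0[OF K_ideal] unfolding B_def by (auto simp: in_keys_iff)
  then have Bne: "B \<noteq> {}" and Bfin: "finite B" unfolding B_def by auto
  from mo_max[OF mo Bfin Bne] obtain M where M: "M \<in> B" "\<forall>F\<in>B. F \<noteq> M \<longrightarrow> ord F M" by blast
  define h2 where "h2 = (\<Sum>F\<in>B. Poly_Mapping.single F (Poly_Mapping.lookup h F))"
  have lh2: "Poly_Mapping.lookup h2 F = (if F \<in> B then Poly_Mapping.lookup h F else 0)" for F
  proof -
    have "Poly_Mapping.lookup h2 F = (\<Sum>G\<in>B. (Poly_Mapping.lookup h G when G = F))"
      unfolding h2_def by (simp add: lookup_sum lookup_single)
    also have "\<dots> = (if F \<in> B then Poly_Mapping.lookup h F else 0)"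
      using Bfin by (simp add: when_def sum.delta)
    finally show ?thesis .
  qed
  have "h - h2 \<in> I"
  proof (rule K_poly)
    fix F
    show "Poly_Mapping.lookup (h - h2) F \<in> K"
      using ideal_0[OF K_ideal] by (cases "F \<in> B") (auto simp: lookup_minus lh2 B_def in_keys_iff)
  qed
  then have h2I: "h2 \<in> I" using ideal_diff[OF I h(2) \<open>h - h2 \<in> I\<close>] by simp
  have "\<forall>F\<in>Poly_Mapping.keys h2. F \<noteq> M \<longrightarrow> ord F M"
  proof (intro ballI impI)
    fix F assume "F \<in> Poly_Mapping.keys h2" "F \<noteq> M"
    then have "F \<in> B" using lh2[of F] by (auto simp: in_keys_iff split: if_splits)
    then show "ord F M" using M(2) \<open>F \<noteq> M\<close> by blast
  qed
  then have "Poly_Mapping.lookup h2 M \<in> Lset ord I M" unfolding Lset_def using h2I by blast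
  then have "Poly_Mapping.lookup h M \<in> J M" using lh2[of M] M(1) unfolding J_Lset by simp
  moreover have "Poly_Mapping.lookup h M * e M \<in> K" using h(1) unfolding stdp_def by blast
  ultimately have "Poly_Mapping.lookup h M \<in> K" by (rule K_coeff_split)
  then show False using M(1) unfolding B_def by blast
qed

definition bad where "bad f = {F \<in> Poly_Mapping.keys f. Poly_Mapping.lookup f F * e F \<notin> K}"

lemma bad_finite: "finite (bad f)" unfolding bad_def by auto

lemma bad_empty: assumes "bad f = {}" shows "std f"
  unfolding stdp_def
proof
  fix E show "Poly_Mapping.lookup f E * e E \<in> K"
  proof (cases "E \<in> Poly_Mapping.keys f")
    case True then show ?thesis using assms unfolding bad_def by blast
  next
    case False then show ?thesis using ideal_0[OF K_ideal] by (simp add: in_keys_iff)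
  qed
qed

lemma nf_step:
  assumes IH: "\<And>M f. ord M E0 \<Longrightarrow> (\<forall>F\<in>bad f. F = M \<or> ord F M) \<Longrightarrow> \<exists>g. std g \<and> f - g \<in> I"
    and b: "\<forall>F\<in>bad f. ord F E0"
  shows "\<exists>g. std g \<and> f - g \<in> I"
proof (cases "bad f = {}")
  case True then show ?thesis using bad_empty ideal_0[OF I] by (intro exI[of _ f]) auto
next
  case False
  from mo_max[OF mo bad_finite False] obtain M where M: "M \<in> bad f" "\<forall>F\<in>bad f. F \<noteq> M \<longrightarrow> ord F M" by blast
  have "ord M E0" using b M(1) by blast
  from IH[OF this] M(2) show ?thesis by blast
qed

lemma nf_aux:
  "\<forall>f. (\<forall>F\<in>bad f. F = E0 \<or> ord F E0) \<longrightarrow> (\<exists>g. std g \<and> f - g \<in> I)"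
proof (induction E0 rule: wf_induct[OF mo_wf[OF mo]])
  case (1 E0)
  have IH: "\<And>M f. ord M E0 \<Longrightarrow> (\<forall>F\<in>bad f. F = M \<or> ord F M) \<Longrightarrow> \<exists>g. std g \<and> f - g \<in> I"
    using 1 by blast
  show ?case
  proof (intro allI impI)
    fix f assume b: "\<forall>F\<in>bad f. F = E0 \<or> ord F E0"
    show "\<exists>g. std g \<and> f - g \<in> I"
    proof (cases "E0 \<in> bad f")
      case False
      have "\<forall>F\<in>bad f. ord F E0"
      proof
        fix F assume F: "F \<in> bad f"
        then have "F = E0 \<or> ord F E0" using b by blast
        moreover have "F \<noteq> E0" using F False by blast
        ultimately show "ord F E0" by blast
      qed
      from nf_step[OF IH this] show ?thesis .
    next
      case True
      define c where "c = Poly_Mapping.lookup f E0"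
      have "c * e E0 \<in> J E0" using ideal_mult[OF J_ideal e_prop(1)] .
      then obtain h where h: "h \<in> I" "Poly_Mapping.lookup h E0 = c * e E0" "\<forall>F\<in>Poly_Mapping.keys h. F \<noteq> E0 \<longrightarrow> ord F E0"
        unfolding J_Lset Lset_def by blast
      define f' where "f' = f - h"
      have bf': "\<forall>F\<in>bad f'. ord F E0"
      proof
        fix F assume F: "F \<in> bad f'"
        show "ord F E0"
        proof (cases "F = E0")
          case True
          have "Poly_Mapping.lookup f' E0 * e E0 = c * ((1 - e E0) * e E0)"
            unfolding f'_def by (simp add: lookup_minus h(2) c_def algebra_simps)
          then have "Poly_Mapping.lookup f' E0 * e E0 \<in> K" using ideal_mult[OF K_ideal e_idem] by simp
          then show ?thesis using F True unfolding bad_def by blast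
        next
          case False
          show ?thesis
          proof (rule ccontr)
            assume no: "\<not> ord F E0"
            then have "F \<notin> Poly_Mapping.keys h" using h(3) False by blast
            then have "Poly_Mapping.lookup f' F = Poly_Mapping.lookup f F"
              unfolding f'_def by (simp add: lookup_minus in_keys_iff)
            then have "F \<in> bad f" using F unfolding bad_def by (auto simp: in_keys_iff)
            then show False using b False no by blast
          qed
        qed
      qed
      have "\<exists>g. std g \<and> f' - g \<in> I" by (rule nf_step[where f=f', OF IH bf'])
      then obtain g where g: "std g" "f' - g \<in> I" by blast
      have "f - g = (f' - g) + h" unfolding f'_def by simp
      then have "f - g \<in> I" using ideal_add[OF I g(2) h(1)] by metis
      then show ?thesis using g(1) by blast
    qed
  qed
qed

lemma nf_exists: "\<exists>g. std g \<and> f - g \<in> I"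
proof (cases "bad f = {}")
  case True then show ?thesis using bad_empty ideal_0[OF I] by (intro exI[of _ f]) auto
next
  case False
  from mo_max[OF mo bad_finite False] obtain M where M: "M \<in> bad f" "\<forall>F\<in>bad f. F \<noteq> M \<longrightarrow> ord F M" by blast
  then show ?thesis using nf_aux[of M] by blast
qed

end


locale amod =
  fixes N :: "('r::comm_ring_1, 'n) amod"
  assumes amod: "is_amod N"
begin

abbreviation "C \<equiv> mcarrier N"
abbreviation "add \<equiv> madd N"
abbreviation "z \<equiv> mzero N"
abbreviation "sm \<equiv> msmult N"

lemmas AC = amod[unfolded is_amod_def]
lemmas A1 = AC[THEN conjunct1]
lemmas A2 = AC[THEN conjunct2, THEN conjunct1]
lemmas A3 = AC[THEN conjunct2, THEN conjunct2, THEN conjunct1]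
lemmas A4 = AC[THEN conjunct2, THEN conjunct2, THEN conjunct2, THEN conjunct1]
lemmas A5 = AC[THEN conjunct2, THEN conjunct2, THEN conjunct2, THEN conjunct2, THEN conjunct1]
lemmas A6 = AC[THEN conjunct2, THEN conjunct2, THEN conjunct2, THEN conjunct2, THEN conjunct2, THEN conjunct1]
lemmas A7 = AC[THEN conjunct2, THEN conjunct2, THEN conjunct2, THEN conjunct2, THEN conjunct2, THEN conjunct2, THEN conjunct1]
lemmas A8 = AC[THEN conjunct2, THEN conjunct2, THEN conjunct2, THEN conjunct2, THEN conjunct2, THEN conjunct2, THEN conjunct2, THEN conjunct1]
lemmas A9 = AC[THEN conjunct2, THEN conjunct2, THEN conjunct2, THEN conjunct2, THEN conjunct2, THEN conjunct2, THEN conjunct2, THEN conjunct2, THEN conjunct1]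
lemmas A10 = AC[THEN conjunct2, THEN conjunct2, THEN conjunct2, THEN conjunct2, THEN conjunct2, THEN conjunct2, THEN conjunct2, THEN conjunct2, THEN conjunct2, THEN conjunct1]
lemmas A11 = AC[THEN conjunct2, THEN conjunct2, THEN conjunct2, THEN conjunct2, THEN conjunct2, THEN conjunct2, THEN conjunct2, THEN conjunct2, THEN conjunct2, THEN conjunct2]

lemma z_in: "z \<in> C" by (rule A1)
lemma add_in: "x \<in> C \<Longrightarrow> y \<in> C \<Longrightarrow> add x y \<in> C" using A2 by blast
lemma sm_in: "x \<in> C \<Longrightarrow> sm a x \<in> C" using A3 by blast
lemma add_assoc: "x \<in> C \<Longrightarrow> y \<in> C \<Longrightarrow> w \<in> C \<Longrightarrow> add (add x y) w = add x (add y w)" using A4 by blast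
lemma add_comm: "x \<in> C \<Longrightarrow> y \<in> C \<Longrightarrow> add x y = add y x" using A5 by blast
lemma add_z: "x \<in> C \<Longrightarrow> add z x = x" using A6 by blast
lemma add_z2: "x \<in> C \<Longrightarrow> add x z = x" using add_z[of x] add_comm[OF _ z_in, of x] by simp
lemma neg_ex: "x \<in> C \<Longrightarrow> \<exists>y\<in>C. add x y = z" using A7 by blast
lemma sm_add: "x \<in> C \<Longrightarrow> y \<in> C \<Longrightarrow> sm a (add x y) = add (sm a x) (sm a y)" using A8 by blast
lemma add_sm: "x \<in> C \<Longrightarrow> sm (a + b) x = add (sm a x) (sm b x)" using A9 by blast
lemma sm_sm: "x \<in> C \<Longrightarrow> sm (a * b) x = sm a (sm b x)" using A10 by blast
lemma sm_1: "x \<in> C \<Longrightarrow> sm 1 x = x" using A11 by blast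

lemma add_left_comm: "x \<in> C \<Longrightarrow> y \<in> C \<Longrightarrow> w \<in> C \<Longrightarrow> add x (add y w) = add y (add x w)"
proof -
  assume a: "x \<in> C" "y \<in> C" "w \<in> C"
  have "add x (add y w) = add (add x y) w" using add_assoc[OF a] by simp
  also have "\<dots> = add (add y x) w" using add_comm[OF a(1,2)] by simp
  also have "\<dots> = add y (add x w)" using add_assoc[OF a(2,1,3)] .
  finally show ?thesis .
qed

lemma cancel: assumes "x \<in> C" "y \<in> C" "w \<in> C" "add x y = add x w" shows "y = w"
proof -
  obtain x' where x': "x' \<in> C" "add x x' = z" using neg_ex assms(1) by blast
  have xx: "add x' x = z" using x' add_comm[OF assms(1) x'(1)] by simp
  have "y = add (add x' x) y" using xx add_z[OF assms(2)] by simp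
  also have "\<dots> = add x' (add x w)" using add_assoc[OF x'(1) assms(1,2)] assms(4) by simp
  also have "\<dots> = add (add x' x) w" using add_assoc[OF x'(1) assms(1,3)] by simp
  also have "\<dots> = w" using xx add_z[OF assms(3)] by simp
  finally show ?thesis .
qed

lemma sm_0: assumes "x \<in> C" shows "sm 0 x = z"
proof -
  have "add (sm 0 x) (sm 0 x) = add (sm 0 x) z"
    using add_sm[OF assms, of 0 0] add_z2[OF sm_in[OF assms]] by simp
  then show ?thesis using cancel sm_in[OF assms] z_in by blast
qed

lemma sm_z: "sm a z = z"
proof -
  have "add (sm a z) (sm a z) = add (sm a z) z"
    using sm_add[OF z_in z_in, of a] add_z[OF z_in] add_z2[OF sm_in[OF z_in]] by simp
  then show ?thesis using cancel sm_in[OF z_in] z_in by blast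
qed

lemma sm_neg: "x \<in> C \<Longrightarrow> add (sm a x) (sm (- a) x) = z"
  using add_sm[of x a "-a"] sm_0 by simp

lemma sm_K: "annihilated K N \<Longrightarrow> x \<in> C \<Longrightarrow> a - b \<in> K \<Longrightarrow> sm a x = sm b x"
proof -
  assume an: "annihilated K N" and x: "x \<in> C" and ab: "a - b \<in> K"
  have "sm a x = sm (b + (a - b)) x" by simp
  also have "\<dots> = add (sm b x) (sm (a - b) x)" using add_sm[OF x] .
  also have "sm (a - b) x = z" using an ab x unfolding annihilated_def by blast
  finally show ?thesis using add_z2[OF sm_in[OF x]] by simp
qed

end

lemma submod_amod:
  assumes "is_amod N" "is_submod S N"
  shows "is_amod (N\<lparr>mcarrier := S\<rparr>)"
proof -
  interpret amod N by (rule amod.intro) fact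
  have S: "S \<subseteq> C" "z \<in> S" "\<And>x y. x \<in> S \<Longrightarrow> y \<in> S \<Longrightarrow> add x y \<in> S" "\<And>a x. x \<in> S \<Longrightarrow> sm a x \<in> S"
    using assms(2) unfolding is_submod_def by blast+
  have inv: "\<exists>y\<in>S. add x y = z" if "x \<in> S" for x
  proof -
    have "add x (sm (-1) x) = z" using sm_neg[of x 1] sm_1 that S(1) by auto
    then show ?thesis using S(4) that by blast
  qed
  have SC: "\<And>x. x \<in> S \<Longrightarrow> x \<in> C" using S(1) by auto
  have f1: "\<forall>x\<in>S. \<forall>y\<in>S. \<forall>w\<in>S. add (add x y) w = add x (add y w)" using SC add_assoc by blast
  have f2: "\<forall>x\<in>S. \<forall>y\<in>S. add x y = add y x" using SC add_comm by blast
  have f3: "\<forall>x\<in>S. add z x = x" using SC add_z by blast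
  have f4: "\<forall>a. \<forall>x\<in>S. \<forall>y\<in>S. sm a (add x y) = add (sm a x) (sm a y)" using SC sm_add by blast
  have f5: "\<forall>a b. \<forall>x\<in>S. sm (a + b) x = add (sm a x) (sm b x)" using SC add_sm by blast
  have f6: "\<forall>a b. \<forall>x\<in>S. sm (a * b) x = sm a (sm b x)" using SC sm_sm by blast
  have f7: "\<forall>x\<in>S. sm 1 x = x" using SC sm_1 by blast
  show ?thesis unfolding is_amod_def using S(2,3,4) inv f1 f2 f3 f4 f5 f6 f7 by simp
qed

definition nsum :: "('r, 'n) amod \<Rightarrow> ('b \<Rightarrow> 'n) \<Rightarrow> 'b set \<Rightarrow> 'n" where
  "nsum N h D = Finite_Set.fold (\<lambda>y acc. if acc \<in> mcarrier N then madd N (h y) acc else acc) (mzero N) D"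

context amod
begin

lemma nsum_cfc: "comp_fun_commute_on {y. h y \<in> C} (\<lambda>y acc. if acc \<in> C then add (h y) acc else acc)"
proof
  fix x y assume xy: "x \<in> {y. h y \<in> C}" "y \<in> {y. h y \<in> C}"
  show "(\<lambda>acc. if acc \<in> C then add (h y) acc else acc) \<circ> (\<lambda>acc. if acc \<in> C then add (h x) acc else acc) =
        (\<lambda>acc. if acc \<in> C then add (h x) acc else acc) \<circ> (\<lambda>acc. if acc \<in> C then add (h y) acc else acc)"
    using xy by (auto simp: fun_eq_iff add_in add_left_comm)
qed

lemma nsum_empty [simp]: "nsum N h {} = z" unfolding nsum_def by simp

lemma nsum_insert_raw:
  assumes "finite D" "x \<notin> D" "h x \<in> C" "h ` D \<subseteq> C"
  shows "nsum N h (insert x D) = (if nsum N h D \<in> C then add (h x) (nsum N h D) else nsum N h D)"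
  unfolding nsum_def
  by (rule comp_fun_commute_on.fold_insert[OF nsum_cfc]) (use assms in auto)

lemma nsum_closed_gen:
  assumes "finite D" "h ` D \<subseteq> S" "S \<subseteq> C" "z \<in> S" "\<And>x y. x \<in> S \<Longrightarrow> y \<in> S \<Longrightarrow> add x y \<in> S"
  shows "nsum N h D \<in> S"
  using assms(1,2)
proof (induction D rule: finite_induct)
  case empty then show ?case using assms by simp
next
  case (insert x D)
  then have hS: "nsum N h D \<in> S" by auto
  have hC: "h x \<in> C" "h ` D \<subseteq> C" using insert.prems assms(3) by auto
  have "nsum N h (insert x D) = add (h x) (nsum N h D)"
    using nsum_insert_raw[OF insert.hyps(1,2) hC] hS assms(3) by auto
  then show ?case using assms(5) hS insert.prems by auto
qed

lemma nsum_closed: "finite D \<Longrightarrow> h ` D \<subseteq> C \<Longrightarrow> nsum N h D \<in> C"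
  using nsum_closed_gen[of D h C] z_in add_in by blast

lemma nsum_insert:
  assumes "finite D" "x \<notin> D" "h x \<in> C" "h ` D \<subseteq> C"
  shows "nsum N h (insert x D) = add (h x) (nsum N h D)"
  using nsum_insert_raw[OF assms] nsum_closed[OF assms(1,4)] by simp

lemma nsum_cong: "finite D \<Longrightarrow> (\<And>y. y \<in> D \<Longrightarrow> h y = h' y) \<Longrightarrow> h ` D \<subseteq> C \<Longrightarrow> nsum N h D = nsum N h' D"
proof (induction D rule: finite_induct)
  case empty then show ?case by simp
next
  case (insert x D)
  then have "nsum N h D = nsum N h' D" by auto
  moreover have "h' ` D \<subseteq> C" "h' x \<in> C" using insert.prems by auto
  ultimately show ?case using nsum_insert[OF insert.hyps(1,2)] insert.prems by simp
qed

lemma nsum_add: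
  "finite D \<Longrightarrow> h1 ` D \<subseteq> C \<Longrightarrow> h2 ` D \<subseteq> C \<Longrightarrow>
    nsum N (\<lambda>y. add (h1 y) (h2 y)) D = add (nsum N h1 D) (nsum N h2 D)"
proof (induction D rule: finite_induct)
  case empty then show ?case using add_z[OF z_in] by simp
next
  case (insert x D)
  have c: "h1 x \<in> C" "h2 x \<in> C" "h1 ` D \<subseteq> C" "h2 ` D \<subseteq> C" using insert.prems by auto
  have s1: "nsum N h1 D \<in> C" "nsum N h2 D \<in> C" using nsum_closed[OF insert.hyps(1)] c by auto
  have "nsum N (\<lambda>y. add (h1 y) (h2 y)) (insert x D) = add (add (h1 x) (h2 x)) (nsum N (\<lambda>y. add (h1 y) (h2 y)) D)"
    by (rule nsum_insert[OF insert.hyps(1,2)]) (use c add_in in auto)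
  also have "\<dots> = add (add (h1 x) (h2 x)) (add (nsum N h1 D) (nsum N h2 D))"
    using insert.IH c by simp
  also have "\<dots> = add (add (h1 x) (nsum N h1 D)) (add (h2 x) (nsum N h2 D))"
    using c s1 by (metis add_assoc add_in add_left_comm)
  also have "\<dots> = add (nsum N h1 (insert x D)) (nsum N h2 (insert x D))"
    using nsum_insert[OF insert.hyps(1,2)] c by simp
  finally show ?case .
qed

lemma nsum_zero_ext:
  assumes "finite E" "D \<inter> E = {}" "finite D" "h ` D \<subseteq> C" "\<And>y. y \<in> E \<Longrightarrow> h y = z"
  shows "nsum N h (D \<union> E) = nsum N h D"
  using assms(1,2,5)
proof (induction E rule: finite_induct)
  case empty then show ?case by simp
next
  case (insert x E)
  have "x \<notin> D \<union> E" using insert by auto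
  moreover have "h ` (D \<union> E) \<subseteq> C" using assms(4) insert.prems z_in by auto
  moreover have "h x \<in> C" "finite (D \<union> E)" using insert.prems z_in assms(3) insert.hyps(1) by auto
  ultimately have "nsum N h (insert x (D \<union> E)) = add (h x) (nsum N h (D \<union> E))"
    using nsum_insert[of "D \<union> E" x h] by blast
  also have "\<dots> = add z (nsum N h D)" using insert by auto
  also have "\<dots> = nsum N h D" using add_z nsum_closed[OF assms(3,4)] by auto
  finally show ?case by simp
qed

lemma nsum_subset_ext:
  assumes "finite D'" "D \<subseteq> D'" "h ` D \<subseteq> C" "\<And>y. y \<in> D' - D \<Longrightarrow> h y = z"
  shows "nsum N h D' = nsum N h D"
proof -
  have e: "D' = D \<union> (D' - D)" using assms(2) by auto
  have "nsum N h (D \<union> (D' - D)) = nsum N h D"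
    by (rule nsum_zero_ext) (use assms finite_subset in auto)
  then show ?thesis using e by simp
qed

end

definition sig :: "('r::comm_ring_1, 'n) amod \<Rightarrow> ('n \<Rightarrow>\<^sub>0 int) \<Rightarrow> 'n" where
  "sig N u = nsum N (\<lambda>y. msmult N (of_int (Poly_Mapping.lookup u y)) y) (Poly_Mapping.keys u)"

context amod
begin

lemma sig_ext:
  assumes "finite D" "Poly_Mapping.keys u \<subseteq> D" "D \<subseteq> C"
  shows "sig N u = nsum N (\<lambda>y. sm (of_int (Poly_Mapping.lookup u y)) y) D"
  unfolding sig_def
  by (rule nsum_subset_ext[symmetric]) (use assms in \<open>auto simp: sm_in sm_0 in_keys_iff\<close>)

lemma sig_0 [simp]: "sig N 0 = z" unfolding sig_def by simp

lemma sig_add: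
  assumes "Poly_Mapping.keys u \<subseteq> C" "Poly_Mapping.keys v \<subseteq> C"
  shows "sig N (u + v) = add (sig N u) (sig N v)"
proof -
  define D where "D = Poly_Mapping.keys u \<union> Poly_Mapping.keys v"
  have D: "finite D" "D \<subseteq> C" "Poly_Mapping.keys u \<subseteq> D" "Poly_Mapping.keys v \<subseteq> D" "Poly_Mapping.keys (u + v) \<subseteq> D"
    unfolding D_def using assms keys_add[of u v] by auto
  have "sig N (u + v) = nsum N (\<lambda>y. sm (of_int (Poly_Mapping.lookup (u + v) y)) y) D"
    by (rule sig_ext[OF D(1) D(5) D(2)])
  also have "\<dots> = nsum N (\<lambda>y. add (sm (of_int (Poly_Mapping.lookup u y)) y) (sm (of_int (Poly_Mapping.lookup v y)) y)) D"
  proof (rule nsum_cong[OF D(1)])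
    fix y assume "y \<in> D" then have y: "y \<in> C" using D(2) by auto
    then show "sm (of_int (Poly_Mapping.lookup (u + v) y)) y = add (sm (of_int (Poly_Mapping.lookup u y)) y) (sm (of_int (Poly_Mapping.lookup v y)) y)"
      by (simp add: lookup_add add_sm)
  next
    show "(\<lambda>y. sm (of_int (Poly_Mapping.lookup (u + v) y)) y) ` D \<subseteq> C" using D(2) sm_in by auto
  qed
  also have "\<dots> = add (nsum N (\<lambda>y. sm (of_int (Poly_Mapping.lookup u y)) y) D) (nsum N (\<lambda>y. sm (of_int (Poly_Mapping.lookup v y)) y) D)"
    by (rule nsum_add) (use D in \<open>auto simp: sm_in\<close>)
  also have "\<dots> = add (sig N u) (sig N v)"
    using sig_ext[OF D(1) D(3) D(2)] sig_ext[OF D(1) D(4) D(2)] by simp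
  finally show ?thesis .
qed

lemma sig_single: "y \<in> C \<Longrightarrow> sig N (Poly_Mapping.single y k) = sm (of_int k) y"
  unfolding sig_def using sm_0 by (cases "k = 0") (auto simp: nsum_insert[of "{}"] add_z2 sm_in)

lemma sig_closed_gen:
  assumes "Poly_Mapping.keys u \<subseteq> S" "S \<subseteq> C" "z \<in> S" "\<And>x y. x \<in> S \<Longrightarrow> y \<in> S \<Longrightarrow> add x y \<in> S"
    "\<And>a x. x \<in> S \<Longrightarrow> sm a x \<in> S"
  shows "sig N u \<in> S"
  unfolding sig_def by (rule nsum_closed_gen) (use assms in auto)

lemma sig_closed: "Poly_Mapping.keys u \<subseteq> C \<Longrightarrow> sig N u \<in> C"
  using sig_closed_gen[of u C] z_in add_in sm_in by blast

lemma sig_neg: "Poly_Mapping.keys u \<subseteq> C \<Longrightarrow> add (sig N u) (sig N (- u)) = z"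
  using sig_add[of u "- u"] by simp

end

lemma nsum_restrict:
  assumes "is_amod N" "is_submod S N" "finite D" "h ` D \<subseteq> S"
  shows "nsum (N\<lparr>mcarrier := S\<rparr>) h D = nsum N h D"
  using assms(3,4)
proof (induction D rule: finite_induct)
  case empty then show ?case by (simp add: nsum_def)
next
  case (insert x D)
  interpret A: amod N by (rule amod.intro) fact
  interpret B: amod "N\<lparr>mcarrier := S\<rparr>" by (rule amod.intro, rule submod_amod) fact+
  have S: "S \<subseteq> A.C" using assms(2) unfolding is_submod_def by blast
  have "nsum (N\<lparr>mcarrier := S\<rparr>) h (insert x D) = madd N (h x) (nsum (N\<lparr>mcarrier := S\<rparr>) h D)"
    using B.nsum_insert[OF insert.hyps(1,2)] insert.prems by simp
  also have "\<dots> = madd N (h x) (nsum N h D)" using insert by auto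
  also have "\<dots> = nsum N h (insert x D)"
  proof -
    have "h x \<in> A.C" "h ` D \<subseteq> A.C" using insert.prems S by auto
    from A.nsum_insert[OF insert.hyps(1,2) this] show ?thesis by simp
  qed
  finally show ?case .
qed

lemma sig_restrict:
  assumes "is_amod N" "is_submod S N" "Poly_Mapping.keys u \<subseteq> S"
  shows "sig (N\<lparr>mcarrier := S\<rparr>) u = sig N u"
proof -
  have "(\<lambda>y. msmult N (of_int (Poly_Mapping.lookup u y)) y) ` Poly_Mapping.keys u \<subseteq> S"
    using assms(2,3) unfolding is_submod_def by auto
  then show ?thesis unfolding sig_def using nsum_restrict[OF assms(1,2) finite_keys] by simp
qed


lemma zs_gen: "s \<in> S \<Longrightarrow> s \<in> zspan S"
  using zspan_add[OF zspan_zero, of s S] by simp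
lemma zs_neg: "x \<in> zspan S \<Longrightarrow> - x \<in> zspan S"
  using zspan_diff[OF zspan_zero, of x S] by simp
lemma zs_add: "x \<in> zspan S \<Longrightarrow> y \<in> zspan S \<Longrightarrow> x + y \<in> zspan S"
  using zspan_diff[of x S "- y"] zs_neg[of y S] by simp
lemma zs_sum: "(\<And>i. i \<in> D \<Longrightarrow> f i \<in> zspan S) \<Longrightarrow> sum f D \<in> zspan S"
  by (induction D rule: infinite_finite_induct) (auto intro: zs_add zspan_zero)
lemma zs_cmul: "x \<in> zspan S \<Longrightarrow> frag_cmul k x \<in> zspan S"
  by (rule frag_closure_minus_cmul[where P = "\<lambda>x. x \<in> zspan S"]) (auto intro: zspan_zero zspan_diff)
lemma zs_frag_extend:
  "(\<And>k. k \<in> Poly_Mapping.keys t \<Longrightarrow> f k \<in> zspan S) \<Longrightarrow> frag_extend f t \<in> zspan S"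
  unfolding frag_extend_def by (intro zs_sum zs_cmul) auto

lemma zs_keys:
  assumes "\<And>s. s \<in> S \<Longrightarrow> Poly_Mapping.keys s \<subseteq> X"
  shows "x \<in> zspan S \<Longrightarrow> Poly_Mapping.keys x \<subseteq> X"
proof (induction rule: zspan.induct)
  case zspan_zero then show ?case by simp
next
  case (zspan_add x s) then show ?case using assms keys_add[of x s] by blast
next
  case (zspan_diff x y) then show ?case using keys_diff[of x y] by blast
qed

section \<open>Tensor relations\<close>

lemma T1: "n \<in> mcarrier N \<Longrightarrow> n' \<in> mcarrier N \<Longrightarrow> m \<in> mcarrier M \<Longrightarrow>
  tgen (madd N n n') m - tgen n m - tgen n' m \<in> tensor_rel N M"
  unfolding tensor_rel_def by (rule zs_gen, rule UnI1, rule UnI1, rule CollectI, rule exI[of _ n], rule exI[of _ n'], rule exI[of _ m], intro conjI refl)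

lemma T2: "n \<in> mcarrier N \<Longrightarrow> m \<in> mcarrier M \<Longrightarrow> m' \<in> mcarrier M \<Longrightarrow>
  tgen n (madd M m m') - tgen n m - tgen n m' \<in> tensor_rel N M"
  unfolding tensor_rel_def by (rule zs_gen, rule UnI1, rule UnI2, rule CollectI, rule exI[of _ n], rule exI[of _ m], rule exI[of _ m'], intro conjI refl)

lemma T3: "n \<in> mcarrier N \<Longrightarrow> m \<in> mcarrier M \<Longrightarrow>
  tgen (msmult N a n) m - tgen n (msmult M a m) \<in> tensor_rel N M"
  unfolding tensor_rel_def by (rule zs_gen, rule UnI2, rule CollectI, rule exI[of _ a], rule exI[of _ n], rule exI[of _ m], intro conjI refl)

lemma rel_add: "x \<in> tensor_rel N M \<Longrightarrow> y \<in> tensor_rel N M \<Longrightarrow> x + y \<in> tensor_rel N M"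
  unfolding tensor_rel_def by (rule zs_add)
lemma rel_diff: "x \<in> tensor_rel N M \<Longrightarrow> y \<in> tensor_rel N M \<Longrightarrow> x - y \<in> tensor_rel N M"
  unfolding tensor_rel_def by (rule zspan_diff)
lemma rel_neg: "x \<in> tensor_rel N M \<Longrightarrow> - x \<in> tensor_rel N M"
  unfolding tensor_rel_def by (rule zs_neg)
lemma rel_0: "0 \<in> tensor_rel N M"
  unfolding tensor_rel_def by (rule zspan_zero)

lemma T0l:
  assumes "is_amod N" "m \<in> mcarrier M"
  shows "tgen (mzero N) m \<in> tensor_rel N M"
proof -
  interpret amod N by (rule amod.intro) fact
  have "tgen (add z z) m - tgen z m - tgen z m \<in> tensor_rel N M" using T1[OF z_in z_in assms(2)] .
  then have "- tgen z m \<in> tensor_rel N M" using add_z[OF z_in] by simp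
  from rel_neg[OF this] show ?thesis by simp
qed

lemma T0r:
  assumes "is_amod M" "n \<in> mcarrier N"
  shows "tgen n (mzero M) \<in> tensor_rel N M"
proof -
  interpret amod M by (rule amod.intro) fact
  have "tgen n (add z z) - tgen n z - tgen n z \<in> tensor_rel N M" using T2[OF assms(2) z_in z_in] .
  then have "- tgen n z \<in> tensor_rel N M" using add_z[OF z_in] by simp
  from rel_neg[OF this] show ?thesis by simp
qed

lemma tgen_frag: "tgen n m = frag_of (n, m)" unfolding tgen_def by simp

lemma tensor_sig:
  assumes N: "is_amod N" and m: "m \<in> mcarrier M" and u: "Poly_Mapping.keys u \<subseteq> mcarrier N"
  shows "frag_extend (\<lambda>y. frag_of (y, m)) u - tgen (sig N u) m \<in> tensor_rel N M"
proof -
  interpret amod N by (rule amod.intro) fact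
  have "Poly_Mapping.keys u \<subseteq> C \<and> frag_extend (\<lambda>y. frag_of (y, m)) u - tgen (sig N u) m \<in> tensor_rel N M"
    using u
  proof (induction u rule: frag_induction)
    case zero
    then show ?case using rel_neg[OF T0l[OF N m]] by simp
  next
    case (one y)
    then show ?case using sig_single[of y 1] sm_1 rel_0 by (simp add: tgen_frag)
  next
    case (diff a b)
    have ka: "Poly_Mapping.keys a \<subseteq> C" and kb: "Poly_Mapping.keys b \<subseteq> C" using diff by auto
    have kab: "Poly_Mapping.keys (a - b) \<subseteq> C" using ka kb keys_diff[of a b] by blast
    define sa where "sa = sig N a"
    define sb where "sb = sig N b"
    define s' where "s' = sig N (- b)"
    have C: "sa \<in> C" "sb \<in> C" "s' \<in> C" unfolding sa_def sb_def s'_def using ka kb sig_closed by auto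
    have sab: "sig N (a - b) = add sa s'"
      unfolding sa_def s'_def using sig_add[of a "- b"] ka kb by simp
    have nb: "add sb s' = z" unfolding sb_def s'_def using sig_neg[OF kb] .
    have r1: "tgen (add sa s') m - tgen sa m - tgen s' m \<in> tensor_rel N M" using T1[OF C(1) C(3) m] .
    have "tgen (add sb s') m - tgen sb m - tgen s' m \<in> tensor_rel N M" using T1[OF C(2) C(3) m] .
    then have X: "tgen z m - tgen sb m - tgen s' m \<in> tensor_rel N M" using nb by simp
    have "tgen sb m + tgen s' m = tgen z m - (tgen z m - tgen sb m - tgen s' m)" by simp
    then have r2: "tgen sb m + tgen s' m \<in> tensor_rel N M"
      using rel_diff[OF T0l[OF N m] X] by (simp add: add.commute)
    have ea: "frag_extend (\<lambda>y. frag_of (y, m)) a - tgen sa m \<in> tensor_rel N M" using diff sa_def by auto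
    have eb: "frag_extend (\<lambda>y. frag_of (y, m)) b - tgen sb m \<in> tensor_rel N M" using diff sb_def by auto
    have eq: "frag_extend (\<lambda>y. frag_of (y, m)) (a - b) - tgen (sig N (a - b)) m =
      (frag_extend (\<lambda>y. frag_of (y, m)) a - tgen sa m) - (frag_extend (\<lambda>y. frag_of (y, m)) b - tgen sb m)
      - (tgen (add sa s') m - tgen sa m - tgen s' m) - (tgen sb m + tgen s' m)"
      by (simp add: frag_extend_diff sab algebra_simps)
    show ?case using kab eq rel_diff[OF rel_diff[OF rel_diff[OF ea eb] r1] r2] by simp
  qed
  then show ?thesis by blast
qed


context amod
begin

lemma sig_gen3:
  assumes b: "b \<in> C" and c: "c \<in> C"
  shows "sig N (frag_of (add b c) - frag_of b - frag_of c) = z"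
proof -
  define a where "a = add b c"
  have a: "a \<in> C" unfolding a_def using add_in[OF b c] .
  have eq: "frag_of a - frag_of b - frag_of c = Poly_Mapping.single a 1 + Poly_Mapping.single b (-1) + Poly_Mapping.single c (-1)"
    by (simp add: single_uminus)
  have k: "Poly_Mapping.keys (Poly_Mapping.single a (1::int)) \<subseteq> C" "Poly_Mapping.keys (Poly_Mapping.single b (-1::int)) \<subseteq> C"
    "Poly_Mapping.keys (Poly_Mapping.single c (-1::int)) \<subseteq> C" using a b c by auto
  have k2: "Poly_Mapping.keys (Poly_Mapping.single a (1::int) + Poly_Mapping.single b (-1)) \<subseteq> C"
    using k keys_add[of "Poly_Mapping.single a (1::int)" "Poly_Mapping.single b (-1)"] by blast
  define b' where "b' = sm (-1) b"
  define c' where "c' = sm (-1) c"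
  have bc': "b' \<in> C" "c' \<in> C" unfolding b'_def c'_def using sm_in b c by auto
  have nb: "add b b' = z" unfolding b'_def using sm_neg[OF b, of 1] sm_1[OF b] by simp
  have nc: "add c c' = z" unfolding c'_def using sm_neg[OF c, of 1] sm_1[OF c] by simp
  have s1: "sig N (Poly_Mapping.single a 1 + Poly_Mapping.single b (-1)) = add (sig N (Poly_Mapping.single a 1)) (sig N (Poly_Mapping.single b (-1)))"
    by (rule sig_add[OF k(1) k(2)])
  have s2: "sig N (Poly_Mapping.single a 1 + Poly_Mapping.single b (-1) + Poly_Mapping.single c (-1)) =
     add (sig N (Poly_Mapping.single a 1 + Poly_Mapping.single b (-1))) (sig N (Poly_Mapping.single c (-1)))"
    by (rule sig_add[OF k2 k(3)])
  have s3: "sig N (Poly_Mapping.single a (1::int)) = a" using sig_single[OF a, of 1] sm_1[OF a] by simp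
  have s4: "sig N (Poly_Mapping.single b (-1::int)) = b'" using sig_single[OF b, of "-1"] unfolding b'_def by simp
  have s5: "sig N (Poly_Mapping.single c (-1::int)) = c'" using sig_single[OF c, of "-1"] unfolding c'_def by simp
  have "sig N (frag_of a - frag_of b - frag_of c) = add (add a b') c'"
    unfolding eq s2 s1 s3 s4 s5 ..
  also have "add a b' = add b' a" by (rule add_comm[OF a bc'(1)])
  also have "add b' a = add (add b' b) c" unfolding a_def by (rule add_assoc[OF bc'(1) b c, symmetric])
  also have "add b' b = z" using add_comm[OF b bc'(1)] nb by simp
  also have "add z c = c" by (rule add_z[OF c])
  also have "add c c' = z" by (rule nc)
  finally show ?thesis unfolding a_def .
qed

end

lemma sig_lin_zero:
  assumes N: "is_amod N" and M: "is_amod M" and an: "annihilated K N"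
    and cadd: "\<And>x y. x \<in> mcarrier M \<Longrightarrow> y \<in> mcarrier M \<Longrightarrow> cE (madd M x y) - (cE x + cE y) \<in> K"
    and csm: "\<And>a x. x \<in> mcarrier M \<Longrightarrow> cE (msmult M a x) - cE x * a \<in> K"
    and t: "t \<in> tensor_rel N M"
  shows "Poly_Mapping.keys t \<subseteq> mcarrier N \<times> mcarrier M \<and>
    sig N (frag_extend (\<lambda>k. frag_of (msmult N (cE (snd k)) (fst k))) t) = mzero N"
proof -
  interpret amod N by (rule amod.intro) fact
  interpret BM: amod M by (rule amod.intro) fact
  define g where "g = (\<lambda>k. msmult N (cE (snd k)) (fst k))"
  define lin where "lin = (\<lambda>t. frag_extend (\<lambda>k. frag_of (g k)) t)"
  have lin_tgen: "lin (tgen n m) = frag_of (g (n, m))" for n m unfolding lin_def by (simp add: tgen_frag)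
  have lin_diff: "lin (x - y) = lin x - lin y" for x y unfolding lin_def by (rule frag_extend_diff)
  have lin_add: "lin (x + y) = lin x + lin y" for x y unfolding lin_def by (rule frag_extend_add)
  have lin_keys: "Poly_Mapping.keys x \<subseteq> C \<times> BM.C \<Longrightarrow> Poly_Mapping.keys (lin x) \<subseteq> C" for x
  proof -
    assume kx: "Poly_Mapping.keys x \<subseteq> C \<times> BM.C"
    have "Poly_Mapping.keys (lin x) \<subseteq> (\<Union>k\<in>Poly_Mapping.keys x. Poly_Mapping.keys (frag_of (g k)))"
      unfolding lin_def by (rule keys_frag_extend)
    also have "\<dots> \<subseteq> C" using kx sm_in unfolding g_def by auto
    finally show ?thesis .
  qed
  define G where "G = {tgen (madd N n n') m - tgen n m - tgen n' m | n n' m.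
          n \<in> mcarrier N \<and> n' \<in> mcarrier N \<and> m \<in> mcarrier M}
    \<union> {tgen n (madd M m m') - tgen n m - tgen n m' | n m m'.
          n \<in> mcarrier N \<and> m \<in> mcarrier M \<and> m' \<in> mcarrier M}
    \<union> {tgen (msmult N a n) m - tgen n (msmult M a m) | a n m.
          n \<in> mcarrier N \<and> m \<in> mcarrier M}"
  have key3: "Poly_Mapping.keys (tgen a b - tgen c d - tgen e f) \<subseteq> {(a,b),(c,d),(e,f)}" for a b c d e f
    using keys_diff[of "tgen a b - tgen c d" "tgen e f"] keys_diff[of "tgen a b" "tgen c d"] unfolding tgen_def by auto
  have key2: "Poly_Mapping.keys (tgen a b - tgen c d) \<subseteq> {(a,b),(c,d)}" for a b c d
    using keys_diff[of "tgen a b" "tgen c d"] unfolding tgen_def by auto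
  have gen: "Poly_Mapping.keys s \<subseteq> C \<times> BM.C \<and> sig N (lin s) = z" if s: "s \<in> G" for s
  proof -
    from s consider (g1) n n' m where "s = tgen (madd N n n') m - tgen n m - tgen n' m" "n \<in> C" "n' \<in> C" "m \<in> BM.C"
      | (g2) n m m' where "s = tgen n (madd M m m') - tgen n m - tgen n m'" "n \<in> C" "m \<in> BM.C" "m' \<in> BM.C"
      | (g3) a n m where "s = tgen (msmult N a n) m - tgen n (msmult M a m)" "n \<in> C" "m \<in> BM.C"
      unfolding G_def Un_iff mem_Collect_eq by (elim disjE exE conjE) blast+
    then show ?thesis
    proof cases
      case g1
      have "Poly_Mapping.keys s \<subseteq> {(madd N n n', m), (n, m), (n', m)}" using key3 g1(1) by simp
      then have "Poly_Mapping.keys s \<subseteq> C \<times> BM.C" using g1 add_in by auto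
      moreover have "lin s = frag_of (add (sm (cE m) n) (sm (cE m) n')) - frag_of (sm (cE m) n) - frag_of (sm (cE m) n')"
        using g1 by (simp add: lin_diff lin_tgen g_def sm_add)
      ultimately show ?thesis using sig_gen3 sm_in g1 by simp
    next
      case g2
      have "Poly_Mapping.keys s \<subseteq> {(n, madd M m m'), (n, m), (n, m')}" using key3 g2(1) by simp
      then have "Poly_Mapping.keys s \<subseteq> C \<times> BM.C" using g2 BM.add_in by auto
      moreover have "sm (cE (madd M m m')) n = add (sm (cE m) n) (sm (cE m') n)"
        using sm_K[OF an g2(2) cadd[OF g2(3,4)]] add_sm[OF g2(2)] by simp
      then have "lin s = frag_of (add (sm (cE m) n) (sm (cE m') n)) - frag_of (sm (cE m) n) - frag_of (sm (cE m') n)"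
        using g2 by (simp add: lin_diff lin_tgen g_def)
      ultimately show ?thesis using sig_gen3 sm_in g2 by simp
    next
      case g3
      have "Poly_Mapping.keys s \<subseteq> {(msmult N a n, m), (n, msmult M a m)}" using key2 g3(1) by simp
      then have "Poly_Mapping.keys s \<subseteq> C \<times> BM.C" using g3 sm_in BM.sm_in by auto
      moreover have "sm (cE (msmult M a m)) n = sm (cE m) (sm a n)"
        using sm_K[OF an g3(2) csm[OF g3(3)]] sm_sm[OF g3(2)] by simp
      then have "lin s = 0" using g3 by (simp add: lin_diff lin_tgen g_def)
      ultimately show ?thesis by simp
    qed
  qed
  have "t \<in> zspan G" using t unfolding tensor_rel_def G_def .
  then have "Poly_Mapping.keys t \<subseteq> C \<times> BM.C \<and> sig N (lin t) = z"
  proof (induction rule: zspan.induct)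
    case zspan_zero then show ?case by (simp add: lin_def)
  next
    case (zspan_add x s)
    have gs: "Poly_Mapping.keys s \<subseteq> C \<times> BM.C" "sig N (lin s) = z" using gen[OF zspan_add.hyps(2)] by auto
    have kx: "Poly_Mapping.keys x \<subseteq> C \<times> BM.C" "sig N (lin x) = z" using zspan_add.IH by auto
    have ks: "Poly_Mapping.keys (x + s) \<subseteq> C \<times> BM.C" using gs(1) kx(1) keys_add[of x s] by blast
    have "sig N (lin (x + s)) = add (sig N (lin x)) (sig N (lin s))"
      unfolding lin_add by (rule sig_add[OF lin_keys[OF kx(1)] lin_keys[OF gs(1)]])
    then show ?case using ks gs kx add_z[OF z_in] by simp
  next
    case (zspan_diff x y)
    have kxy: "Poly_Mapping.keys (x - y) \<subseteq> C \<times> BM.C" using zspan_diff keys_diff[of x y] by blast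
    have kx: "Poly_Mapping.keys (lin x) \<subseteq> C" and ky: "Poly_Mapping.keys (lin y) \<subseteq> C"
      using lin_keys zspan_diff by auto
    have "sig N (lin (x - y)) = add (sig N (lin x)) (sig N (- lin y))"
      unfolding lin_diff using sig_add[OF kx, of "- lin y"] ky by simp
    also have "\<dots> = sig N (- lin y)" using zspan_diff add_z sig_closed ky by simp
    also have "\<dots> = z" using sig_neg[OF ky] zspan_diff add_z sig_closed ky by simp
    finally show ?case using kxy by simp
  qed
  then show ?thesis unfolding lin_def g_def by simp
qed


section \<open>The quotient module\<close>

lemma pc_memI: "i \<in> I \<Longrightarrow> f + i \<in> pcoset I f"
  unfolding pcoset_def by blast

lemma pc_memE: "x \<in> pcoset I f \<Longrightarrow> (\<And>i. x = f + i \<Longrightarrow> i \<in> I \<Longrightarrow> P) \<Longrightarrow> P"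
  unfolding pcoset_def by blast

lemma pc_mem: "is_ideal I \<Longrightarrow> f \<in> pcoset I f"
  using pc_memI[OF ideal_0, of I f] by simp

lemma pc_eq: assumes I: "is_ideal I" shows "pcoset I f = pcoset I g \<longleftrightarrow> f - g \<in> I"
proof
  assume "pcoset I f = pcoset I g"
  then have "g \<in> pcoset I f" using pc_mem[OF I, of g] by simp
  then obtain i where "g = f + i" "i \<in> I" by (rule pc_memE)
  then show "f - g \<in> I" using ideal_neg[OF I] by simp
next
  assume fg: "f - g \<in> I"
  show "pcoset I f = pcoset I g"
  proof (intro set_eqI iffI)
    fix x assume "x \<in> pcoset I f"
    then obtain i where i: "x = f + i" "i \<in> I" by (rule pc_memE)
    have "x = g + ((f - g) + i)" using i(1) by simp
    then show "x \<in> pcoset I g" using pc_memI[OF ideal_add[OF I fg i(2)], of g] by simp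
  next
    fix x assume "x \<in> pcoset I g"
    then obtain i where i: "x = g + i" "i \<in> I" by (rule pc_memE)
    have "x = f + (i - (f - g))" using i(1) by simp
    then show "x \<in> pcoset I f" using pc_memI[OF ideal_diff[OF I i(2) fg], of f] by simp
  qed
qed

lemma madd_pc:
  assumes I: "is_ideal I"
  shows "madd (quot_amod I) (pcoset I f) (pcoset I g) = pcoset I (f + g)"
proof (intro set_eqI iffI)
  fix x assume "x \<in> madd (quot_amod I) (pcoset I f) (pcoset I g)"
  then obtain y w where yw: "x = y + w" "y \<in> pcoset I f" "w \<in> pcoset I g" unfolding quot_amod_def by auto
  from yw(2) obtain i where i: "y = f + i" "i \<in> I" by (rule pc_memE)
  from yw(3) obtain j where j: "w = g + j" "j \<in> I" by (rule pc_memE)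
  have "x = (f + g) + (i + j)" using yw(1) i(1) j(1) by (simp add: ac_simps)
  then show "x \<in> pcoset I (f + g)" using pc_memI[OF ideal_add[OF I i(2) j(2)], of "f + g"] by simp
next
  fix x assume "x \<in> pcoset I (f + g)"
  then obtain i where i: "x = (f + g) + i" "i \<in> I" by (rule pc_memE)
  have "x = (f + i) + g" using i(1) by (simp add: ac_simps)
  moreover have "f + i \<in> pcoset I f" using pc_memI[OF i(2)] .
  moreover have "g \<in> pcoset I g" using pc_mem[OF I] .
  ultimately show "x \<in> madd (quot_amod I) (pcoset I f) (pcoset I g)"
    unfolding quot_amod_def by auto
qed

lemma msmult_pc:
  assumes I: "is_ideal I"
  shows "msmult (quot_amod I) a (pcoset I f) = pcoset I (Poly_Mapping.single 0 a * f)"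
proof (intro set_eqI iffI)
  fix x assume "x \<in> msmult (quot_amod I) a (pcoset I f)"
  then obtain y j where yj: "x = Poly_Mapping.single 0 a * y + j" "y \<in> pcoset I f" "j \<in> I" unfolding quot_amod_def by auto
  from yj(2) obtain i where i: "y = f + i" "i \<in> I" by (rule pc_memE)
  have "x = Poly_Mapping.single 0 a * f + (Poly_Mapping.single 0 a * i + j)" using yj(1) i(1) by (simp add: distrib_left)
  then show "x \<in> pcoset I (Poly_Mapping.single 0 a * f)"
    using pc_memI[OF ideal_add[OF I ideal_mult[OF I i(2)] yj(3)]] by simp
next
  fix x assume "x \<in> pcoset I (Poly_Mapping.single 0 a * f)"
  then obtain i where i: "x = Poly_Mapping.single 0 a * f + i" "i \<in> I" by (rule pc_memE)
  moreover have "f \<in> pcoset I f" using pc_mem[OF I] .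
  ultimately show "x \<in> msmult (quot_amod I) a (pcoset I f)"
    unfolding quot_amod_def by auto
qed

lemma mzero_pc: "is_ideal I \<Longrightarrow> mzero (quot_amod I) = pcoset I 0"
  unfolding quot_amod_def pcoset_def by simp

lemma carrier_q: "mcarrier (quot_amod I) = range (pcoset I)" unfolding quot_amod_def by simp

lemma range_ball: "(\<forall>X\<in>range h. P X) \<longleftrightarrow> (\<forall>f. P (h f))" by auto
lemma range_bex: "(\<exists>X\<in>range h. P X) \<longleftrightarrow> (\<exists>f. P (h f))" by auto

lemma quot_is_amod:
  assumes I: "is_ideal I"
  shows "is_amod (quot_amod I)"
proof -
  note S = carrier_q range_ball range_bex madd_pc[OF I] msmult_pc[OF I] mzero_pc[OF I]
  have a: "\<forall>f g. pcoset I (f + g) \<in> range (pcoset I)" by auto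
  have b: "\<forall>a f. pcoset I (Poly_Mapping.single 0 a * f) \<in> range (pcoset I)" by auto
  have c: "\<forall>f. \<exists>g. pcoset I (f + g) = pcoset I 0"
  proof
    fix f show "\<exists>g. pcoset I (f + g) = pcoset I 0" by (rule exI[of _ "- f"]) simp
  qed
  have d: "\<forall>a b f. pcoset I (Poly_Mapping.single 0 (a + b) * f) = pcoset I (Poly_Mapping.single 0 a * f + Poly_Mapping.single 0 b * f)"
    by (simp add: single_add distrib_right)
  have e: "\<forall>a b f. pcoset I (Poly_Mapping.single 0 (a * b) * f) = pcoset I (Poly_Mapping.single 0 a * (Poly_Mapping.single 0 b * f))"
    by (simp add: mult.assoc[symmetric] mult_single)
  have f1: "\<forall>f g h. pcoset I (f + g + h) = pcoset I (f + (g + h))" by (simp add: add.assoc)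
  have f2: "\<forall>f g. pcoset I (f + g) = pcoset I (g + f)" by (simp add: add.commute)
  have f3: "\<forall>a f g. pcoset I (Poly_Mapping.single 0 a * (f + g)) = pcoset I (Poly_Mapping.single 0 a * f + Poly_Mapping.single 0 a * g)"
    by (simp add: distrib_left)
  show ?thesis unfolding is_amod_def S
    using a b c d e f1 f2 f3 by (simp add: madd_pc[OF I] msmult_pc[OF I] mzero_pc[OF I])
qed

lemma quot_annihilated:
  assumes I: "is_ideal I"
  shows "annihilated (contraction I) (quot_amod I)"
  unfolding annihilated_def carrier_q range_ball
proof (intro ballI allI)
  fix k f assume k: "k \<in> contraction I"
  have "Poly_Mapping.single 0 k * f - 0 \<in> I" using k ideal_mult_right[OF I] unfolding contraction_def by simp
  then show "msmult (quot_amod I) k (pcoset I f) = mzero (quot_amod I)"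
    using msmult_pc[OF I] mzero_pc[OF I] pc_eq[OF I] by simp
qed


lemma frag_extend_fun_diff:
  "frag_extend (\<lambda>k. f k - h k) t = frag_extend f t - frag_extend h t"
  using subset_UNIV
proof (induction t rule: frag_induction)
  case zero then show ?case by simp
next
  case (one x) then show ?case by simp
next
  case (diff a b) then show ?case by (simp add: frag_extend_diff)
qed

lemma frag_extend_fun_sum:
  "frag_extend (\<lambda>k. \<Sum>E\<in>D. h E k) t = (\<Sum>E\<in>D. frag_extend (h E) t)"
  using subset_UNIV
proof (induction t rule: frag_induction)
  case zero then show ?case by simp
next
  case (one x) then show ?case by simp
next
  case (diff a b) then show ?case by (simp add: frag_extend_diff sum_subtractf)
qed

lemma poly_expand_sup:
  assumes "finite D" "Poly_Mapping.keys g \<subseteq> D"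
  shows "g = (\<Sum>E\<in>D. Poly_Mapping.single E (Poly_Mapping.lookup g E))"
proof -
  have "(\<Sum>E\<in>D. Poly_Mapping.single E (Poly_Mapping.lookup g E)) = (\<Sum>E\<in>Poly_Mapping.keys g. Poly_Mapping.single E (Poly_Mapping.lookup g E))"
    by (rule sum.mono_neutral_right) (use assms in \<open>auto simp: in_keys_iff\<close>)
  then show ?thesis using poly_expand[of g] by simp
qed

definition nfm where "nfm ord I X = (SOME g. stdp ord I g \<and> X = pcoset I g)"
definition cE where "cE ord I E X = Poly_Mapping.lookup (nfm ord I X) E"
definition xbar where "xbar I E = pcoset I (Poly_Mapping.single E 1)"

context setting
begin

abbreviation "M \<equiv> quot_amod I"

lemma nfm_prop: assumes "X \<in> range (pcoset I)" shows "std (nfm ord I X) \<and> X = pcoset I (nfm ord I X)"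
proof -
  obtain f where f: "X = pcoset I f" using assms by auto
  obtain g where g: "std g" "f - g \<in> I" using nf_exists by blast
  have "X = pcoset I g" using f g(2) pc_eq[OF I] by simp
  then have "\<exists>g. std g \<and> X = pcoset I g" using g(1) by blast
  then show ?thesis unfolding nfm_def by (rule someI_ex)
qed

lemma std_eq:
  assumes "std g" "std h" "pcoset I g = pcoset I h"
  shows "Poly_Mapping.lookup g E - Poly_Mapping.lookup h E \<in> K"
proof -
  have "g - h \<in> I" using assms(3) pc_eq[OF I] by simp
  moreover have "std (g - h)" using std_diff[OF assms(1,2)] .
  ultimately show ?thesis using std_unique[of "g - h" E] by (simp add: lookup_minus)
qed

lemma cE_add:
  assumes X: "X \<in> mcarrier M" and Y: "Y \<in> mcarrier M"
  shows "cE ord I E (madd M X Y) - (cE ord I E X + cE ord I E Y) \<in> K"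
proof -
  have "X \<in> range (pcoset I)" using X by (simp add: carrier_q)
  from nfm_prop[OF this] have x: "std (nfm ord I X)" "X = pcoset I (nfm ord I X)" by auto
  have "Y \<in> range (pcoset I)" using Y by (simp add: carrier_q)
  from nfm_prop[OF this] have y: "std (nfm ord I Y)" "Y = pcoset I (nfm ord I Y)" by auto
  have s: "madd M X Y = pcoset I (nfm ord I X + nfm ord I Y)" using madd_pc[OF I] x(2) y(2) by metis
  have "madd M X Y \<in> range (pcoset I)" using s by auto
  then have z: "std (nfm ord I (madd M X Y))" "madd M X Y = pcoset I (nfm ord I (madd M X Y))" using nfm_prop by auto
  have "Poly_Mapping.lookup (nfm ord I (madd M X Y)) E - Poly_Mapping.lookup (nfm ord I X + nfm ord I Y) E \<in> K"
    by (rule std_eq[OF z(1) std_add[OF x(1) y(1)]]) (use s z(2) in simp)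
  then show ?thesis unfolding cE_def by (simp add: lookup_add)
qed

lemma cE_sm:
  assumes X: "X \<in> mcarrier M"
  shows "cE ord I E (msmult M a X) - cE ord I E X * a \<in> K"
proof -
  have "X \<in> range (pcoset I)" using X by (simp add: carrier_q)
  from nfm_prop[OF this] have x: "std (nfm ord I X)" "X = pcoset I (nfm ord I X)" by auto
  have s: "msmult M a X = pcoset I (Poly_Mapping.single 0 a * nfm ord I X)" using msmult_pc[OF I] x(2) by metis
  have "msmult M a X \<in> range (pcoset I)" using s by auto
  then have z: "std (nfm ord I (msmult M a X))" "msmult M a X = pcoset I (nfm ord I (msmult M a X))" using nfm_prop by auto
  have "Poly_Mapping.lookup (nfm ord I (msmult M a X)) E - Poly_Mapping.lookup (Poly_Mapping.single 0 a * nfm ord I X) E \<in> K"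
    by (rule std_eq[OF z(1) std_smult[OF x(1)]]) (use s z(2) in simp)
  then show ?thesis unfolding cE_def by (simp add: lookup_single0_mult mult.commute)
qed

lemma cE_one: "cE ord I 0 (pcoset I 1) - 1 \<in> K"
proof -
  have "pcoset I 1 \<in> range (pcoset I)" by auto
  then have z: "std (nfm ord I (pcoset I 1))" "pcoset I 1 = pcoset I (nfm ord I (pcoset I 1))" using nfm_prop by auto
  have s1: "std 1" using std_one by simp
  have "Poly_Mapping.lookup (nfm ord I (pcoset I 1)) 0 - Poly_Mapping.lookup 1 0 \<in> K"
    using std_eq[OF z(1) s1, of 0] z(2) by simp
  then show ?thesis unfolding cE_def by simp
qed

lemma M_amod: "is_amod M" using quot_is_amod[OF I] .

lemma stepA:
  assumes N: "is_amod N" and n: "n \<in> mcarrier N" and D: "finite D"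
  shows "tgen n (pcoset I (\<Sum>E\<in>D. Poly_Mapping.single E (c E))) -
     (\<Sum>E\<in>D. tgen (msmult N (c E) n) (xbar I E)) \<in> tensor_rel N M"
  using D
proof (induction D rule: finite_induct)
  case empty
  then show ?case using T0r[OF M_amod n] mzero_pc[OF I] by simp
next
  case (insert E D)
  define P where "P = pcoset I (Poly_Mapping.single E (c E))"
  define Q where "Q = pcoset I (\<Sum>E\<in>D. Poly_Mapping.single E (c E))"
  have PQ: "P \<in> mcarrier M" "Q \<in> mcarrier M" "xbar I E \<in> mcarrier M" unfolding P_def Q_def xbar_def carrier_q by auto
  have tot: "pcoset I (\<Sum>E\<in>insert E D. Poly_Mapping.single E (c E)) = madd M P Q"
    unfolding P_def Q_def using insert.hyps madd_pc[OF I] by simp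
  have Pm: "P = msmult M (c E) (xbar I E)"
    unfolding P_def xbar_def using msmult_pc[OF I] by (simp add: mult_single)
  have r1: "tgen n (madd M P Q) - tgen n P - tgen n Q \<in> tensor_rel N M" using T2[OF n PQ(1,2)] .
  have r2: "tgen (msmult N (c E) n) (xbar I E) - tgen n P \<in> tensor_rel N M" using T3[OF n PQ(3)] Pm by simp
  have r3: "tgen n Q - (\<Sum>E\<in>D. tgen (msmult N (c E) n) (xbar I E)) \<in> tensor_rel N M" using insert.IH unfolding Q_def .
  have "tgen n (pcoset I (\<Sum>E\<in>insert E D. Poly_Mapping.single E (c E))) - (\<Sum>E\<in>insert E D. tgen (msmult N (c E) n) (xbar I E))
     = (tgen n (madd M P Q) - tgen n P - tgen n Q) - (tgen (msmult N (c E) n) (xbar I E) - tgen n P) + (tgen n Q - (\<Sum>E\<in>D. tgen (msmult N (c E) n) (xbar I E)))"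
    using insert.hyps tot by simp
  then show ?case using rel_add[OF rel_diff[OF r1 r2] r3] by simp
qed

end


context setting
begin

lemma flat: "flat_over TYPE('n) K M"
  unfolding flat_over_def
proof (intro allI impI; elim conjE)
  fix N :: "('a, 'n) amod" and S t
  assume N: "is_amod N" and an: "annihilated K N" and sub: "is_submod S N"
    and kt: "Poly_Mapping.keys t \<subseteq> S \<times> mcarrier M" and t: "t \<in> tensor_rel N M"
  interpret A: amod N by (rule amod.intro) fact
  define N' where "N' = N\<lparr>mcarrier := S\<rparr>"
  have hN': "is_amod N'" unfolding N'_def by (rule submod_amod[OF N sub])
  have SC: "S \<subseteq> A.C" and Ssm: "\<And>a x. x \<in> S \<Longrightarrow> msmult N a x \<in> S" using sub unfolding is_submod_def by auto
  define D where "D = (\<Union>k\<in>Poly_Mapping.keys t. Poly_Mapping.keys (nfm ord I (snd k)))"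
  have Dfin: "finite D" unfolding D_def by auto
  define g where "g = (\<lambda>E k. msmult N (cE ord I E (snd k)) (fst k))"
  define h where "h = (\<lambda>E k. frag_of (g E k, xbar I E))"
  have xC: "xbar I E \<in> mcarrier M" for E unfolding xbar_def carrier_q by auto
  have ta: "t - (\<Sum>E\<in>D. frag_extend (h E) t) \<in> tensor_rel N' M"
  proof -
    have "t - (\<Sum>E\<in>D. frag_extend (h E) t) = frag_extend (\<lambda>k. frag_of k - (\<Sum>E\<in>D. h E k)) t"
      using frag_extend_fun_diff[of frag_of "\<lambda>k. \<Sum>E\<in>D. h E k" t] frag_extend_fun_sum[of h D t] frag_expansion[of t]
      by simp
    also have "\<dots> \<in> tensor_rel N' M"
      unfolding tensor_rel_def
    proof (rule zs_frag_extend)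
      fix k assume k: "k \<in> Poly_Mapping.keys t"
      obtain n X where nX: "k = (n, X)" by (cases k)
      have n: "n \<in> S" and X: "X \<in> mcarrier M" using kt k nX by auto
      have "X \<in> range (pcoset I)" using X by (simp add: carrier_q)
      from nfm_prop[OF this] have Xe: "X = pcoset I (nfm ord I X)" by simp
      have "Poly_Mapping.keys (nfm ord I X) \<subseteq> D" unfolding D_def using k nX by auto
      then have "nfm ord I X = (\<Sum>E\<in>D. Poly_Mapping.single E (Poly_Mapping.lookup (nfm ord I X) E))"
        by (rule poly_expand_sup[OF Dfin])
      then have X2: "X = pcoset I (\<Sum>E\<in>D. Poly_Mapping.single E (cE ord I E X))"
        using Xe unfolding cE_def by simp
      have nN': "n \<in> mcarrier N'" unfolding N'_def using n by simp
      have "tgen n (pcoset I (\<Sum>E\<in>D. Poly_Mapping.single E (cE ord I E X))) -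
          (\<Sum>E\<in>D. tgen (msmult N' (cE ord I E X) n) (xbar I E)) \<in> tensor_rel N' M"
        by (rule stepA[OF hN' nN' Dfin])
      moreover have "msmult N' = msmult N" unfolding N'_def by simp
      ultimately have "tgen n X - (\<Sum>E\<in>D. tgen (msmult N (cE ord I E X) n) (xbar I E)) \<in> tensor_rel N' M"
        using X2 by simp
      then show "frag_of k - (\<Sum>E\<in>D. h E k) \<in> zspan
          ({tgen (madd N' n n') m - tgen n m - tgen n' m |n n' m. n \<in> mcarrier N' \<and> n' \<in> mcarrier N' \<and> m \<in> mcarrier M} \<union>
           {tgen n (madd M m m') - tgen n m - tgen n m' |n m m'. n \<in> mcarrier N' \<and> m \<in> mcarrier M \<and> m' \<in> mcarrier M} \<union>
           {tgen (msmult N' a n) m - tgen n (msmult M a m) |a n m. n \<in> mcarrier N' \<and> m \<in> mcarrier M})"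
        unfolding tensor_rel_def h_def g_def nX by (simp add: tgen_frag)
    qed
    finally show ?thesis .
  qed
  have tb: "frag_extend (h E) t \<in> tensor_rel N' M" for E
  proof -
    define u where "u = frag_extend (frag_of \<circ> g E) t"
    have hu: "frag_extend (h E) t = frag_extend (\<lambda>y. frag_of (y, xbar I E)) u"
      unfolding u_def frag_extend_compose h_def by (simp add: comp_def)
    have ku: "Poly_Mapping.keys u \<subseteq> S"
    proof -
      have "Poly_Mapping.keys u \<subseteq> (\<Union>k\<in>Poly_Mapping.keys t. Poly_Mapping.keys ((frag_of \<circ> g E) k))"
        unfolding u_def by (rule keys_frag_extend)
      also have "\<dots> \<subseteq> S" using kt Ssm unfolding g_def by auto
      finally show ?thesis .
    qed
    have ku': "Poly_Mapping.keys u \<subseteq> mcarrier N'" unfolding N'_def using ku by simp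
    have r: "frag_extend (\<lambda>y. frag_of (y, xbar I E)) u - tgen (sig N' u) (xbar I E) \<in> tensor_rel N' M"
      by (rule tensor_sig[OF hN' xC ku'])
    have "sig N' u = sig N u" unfolding N'_def by (rule sig_restrict[OF N sub ku])
    also have "sig N u = mzero N"
    proof -
      have "Poly_Mapping.keys t \<subseteq> mcarrier N \<times> mcarrier M \<and>
        sig N (frag_extend (\<lambda>k. frag_of (msmult N (cE ord I E (snd k)) (fst k))) t) = mzero N"
        by (rule sig_lin_zero[OF N M_amod an cE_add cE_sm t])
      moreover have "u = frag_extend (\<lambda>k. frag_of (msmult N (cE ord I E (snd k)) (fst k))) t"
        unfolding u_def g_def by (simp add: comp_def)
      ultimately show ?thesis by simp
    qed
    finally have "sig N' u = mzero N'" unfolding N'_def by simp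
    then have "tgen (sig N' u) (xbar I E) \<in> tensor_rel N' M" using T0l[OF hN' xC] by simp
    from rel_add[OF r this] show ?thesis using hu by simp
  qed
  have "(\<Sum>E\<in>D. frag_extend (h E) t) \<in> tensor_rel N' M"
    unfolding tensor_rel_def by (rule zs_sum) (use tb in \<open>simp add: tensor_rel_def\<close>)
  from rel_add[OF ta this] show "t \<in> tensor_rel (N\<lparr>mcarrier := S\<rparr>) M" unfolding N'_def by simp
qed

lemma faithful:
  fixes N :: "('a, 'n) amod"
  assumes N: "is_amod N" and an: "annihilated K N"
    and all: "\<forall>t. Poly_Mapping.keys t \<subseteq> mcarrier N \<times> mcarrier M \<longrightarrow> t \<in> tensor_rel N M"
  shows "mcarrier N = {mzero N}"
proof -
  interpret A: amod N by (rule amod.intro) fact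
  have "n = A.z" if n: "n \<in> A.C" for n
  proof -
    define one where "one = pcoset I 1"
    have oC: "one \<in> mcarrier M" unfolding one_def carrier_q by auto
    have "Poly_Mapping.keys (tgen n one) = {(n, one)}" unfolding tgen_def by simp
    then have "Poly_Mapping.keys (tgen n one) \<subseteq> mcarrier N \<times> mcarrier M" using n oC by simp
    then have t: "tgen n one \<in> tensor_rel N M" using all[rule_format] by simp
    have "Poly_Mapping.keys (tgen n one) \<subseteq> mcarrier N \<times> mcarrier M \<and>
        sig N (frag_extend (\<lambda>k. frag_of (msmult N (cE ord I 0 (snd k)) (fst k))) (tgen n one)) = mzero N"
      by (rule sig_lin_zero[OF N M_amod an cE_add[where E=0] cE_sm[where E=0] t])
    then have e0: "sig N (frag_extend (\<lambda>k. frag_of (msmult N (cE ord I 0 (snd k)) (fst k))) (tgen n one)) = A.z" by blast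
    have fe: "frag_extend (\<lambda>k. frag_of (msmult N (cE ord I 0 (snd k)) (fst k))) (tgen n one) = frag_of (msmult N (cE ord I 0 one) n)"
      unfolding tgen_frag by (rule trans[OF frag_extend_of]) simp
    have e1: "sig N (frag_of (msmult N (cE ord I 0 one) n)) = A.z" using e0 unfolding fe .
    have y: "msmult N (cE ord I 0 one) n \<in> A.C" by (rule A.sm_in[OF n])
    have e2: "sig N (frag_of (msmult N (cE ord I 0 one) n)) = msmult N (cE ord I 0 one) n"
      using A.sig_single[OF y, of 1] A.sm_1[OF y] by simp
    have e3: "msmult N (cE ord I 0 one) n = msmult N 1 n"
      by (rule A.sm_K[OF an n]) (use cE_one in \<open>simp add: one_def\<close>)
    have "n = msmult N 1 n" using A.sm_1[OF n] by simp
    also have "\<dots> = msmult N (cE ord I 0 one) n" using e3 by simp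
    also have "\<dots> = sig N (frag_of (msmult N (cE ord I 0 one) n))" using e2 by simp
    also have "\<dots> = A.z" using e1 .
    finally show ?thesis .
  qed
  then show ?thesis using A.z_in by blast
qed

end

theorem proposition4p3:
  fixes ord :: "('v::finite \<Rightarrow>\<^sub>0 nat) \<Rightarrow> ('v \<Rightarrow>\<^sub>0 nat) \<Rightarrow> bool"
    and I :: "(('v \<Rightarrow>\<^sub>0 nat) \<Rightarrow>\<^sub>0 'a::comm_ring_1) set"
  assumes "noetherian TYPE('a)"
    and "monomial_order ord"
    and "is_ideal I"
    and "I \<noteq> UNIV"
    and "\<And>p E. prime_ideal p \<Longrightarrow>
           ext_is_zero p (contraction I) (coeff_ideal (init_ideal ord I) E)
         \<or> ext_is_unit p (contraction I) (coeff_ideal (init_ideal ord I) E)"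
  shows "faithfully_flat_over TYPE('n) (contraction I) (quot_amod I)"
proof -
  interpret setting ord I by (rule setting.intro[OF assms(1,2,3,5)])
  have F: "\<forall>N::('a, 'n) amod. is_amod N \<and> annihilated (contraction I) N \<and>
        (\<forall>t. Poly_Mapping.keys t \<subseteq> mcarrier N \<times> mcarrier (quot_amod I) \<longrightarrow> t \<in> tensor_rel N (quot_amod I)) \<longrightarrow>
        mcarrier N = {mzero N}"
    using faithful by blast
  show ?thesis unfolding faithfully_flat_over_def
    using M_amod quot_annihilated[OF assms(3)] flat F by blast
qed

end
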